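(* In the setting described in the context, with all standing assumptions in force, for every $i\in\{1,\dots,N\}$: $$\lim_{t\to\infty}\|\mathbf x_{(i,:)}^t-\bar{\mathbf s}^t\|=0,\qquad \sum_{t=0}^\infty\gamma^t\|\mathbf x_{(i,:)}^t-\bar{\mathbf s}^t\|<\infty,\qquad \sum_{t=0}^\infty\|\mathbf x_{(i,:)}^t-\bar{\mathbf s}^t\|^2<\infty.$$
   Context: Problem. Let $N,B,d\ge1$. A vector $\mathbf x\in\mathbb R^{dB}$ is partitioned into blocks $\mathbf x=(\mathbf x_1,\dots,\mathbf x_B)$ with $\mathbf x_\ell\in\mathbb R^d$, and $\nabla_\ell$ denotes the partial gradient with respect to block $\ell$. Problem (P) is $$\min_{\mathbf x}\ U(\mathbf x)=\sum_{i=1}^Nf_i(\mathbf x)+\sum_{\ell=1}^B r_\ell(\mathbf x_\ell)\quad\text{s.t. }\mathbf x_\ell\in\mathcal K_\ell,\ \ell=1,\dots,B,$$ with $\mathcal K=\mathcal K_1\times\dots\times\mathcal K_B$. Problem assumptions: - each $\mathcal K_\ell\subseteq\mathbb R^d$ is nonempty, closed and convex; - each $f_i:\mathbb R^{dB}\to\mathbb R$ is $C^1$ on an open set containing $\mathcal K$, and $\nabla f_i$ is $L_i$-Lipschitz continuous and bounded on $\mathcal K$; - each $r_\ell:\mathbb R^d\to\mathbb R$ is convex with bounded subgradients on $\mathcal K_\ell$; - $U$ is coercive on $\mathcal K$. Network. $\mathcal G=(\{1,\dots,N\},\mathcal E)$ is a fixed, strongly connected digraph containing all self-loops. The in-neighbor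 set of $i$ is $\mathcal N_i=\{j:(j,i)\in\mathcal E\}$. Block selection. At each iteration $t\ge0$, agent $i$ picks $\ell_i^t\in\{1,\dots,B\}$. For each $i$ there is a finite $T_i>0$ with $\bigcup_{\tau=0}^{T_i-1}\{\ell_i^{t+\tau}\}=\{1,\dots,B\}$ for all $t\ge0$. Define $\mathcal N_{i,\ell}^t=\{j\in\mathcal N_i:\ell_j^t=\ell\}\cup\{i\}$ and $\mathcal E_\ell^t=\{(j,i)\in\mathcal E:j\in\mathcal N_{i,\ell}^t\}$. Weights. For each $\ell$ and $t$, $A_\ell^t=[a_{ij\ell}^t]$ satisfies $a_{ij\ell}^t>\kappa$ if $(j,i)\in\mathcal E_\ell^t$, $a_{ij\ell}^t=0$ otherwise (for a fixed $\kappa>0$), and $\mathbf 1^\top A_\ell^t=\mathbf 1^\top$. Surrogates. For each $i,\ell$, $\tilde f_{i,\ell}:\mathcal K_\ell\times\mathcal K\to\mathbb R$ satisfies: - $\tilde f_{i,\ell}(\cdot;\mathbf x)$ is $C^1$ and $\tau_i$-strongly convex on $\mathcal K_\ell$ uniformly in $\mathbf x\in\mathcal K$, with $\tau_i>0$; - $\nabla\tilde f_{i,\ell}(\mathbf x_\ell;\mathbf x)=\nabla_\ell f_i(\mathbf x)$ for all $\mathbf x\in\mathcal K$, where $\nabla\tilde f_{i,\ell}$ is the gradient in the first argument and $\mathbf x_\ell$ is the $\ell$-th block of $\mathbf x$; - $\nabla\tilde f_{i,\ell}(\mathbf z;\cdot)$ is Lipschitz continuous on $\mathcal K$ uniformly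 in $\mathbf z\in\mathcal K_\ell$. For $\mathbf w\in\mathcal K$ and $\mathbf g\in\mathbb R^d$ let $$\hat f_{i,\ell}(\mathbf z;\mathbf w,\mathbf g)=\tilde f_{i,\ell}(\mathbf z;\mathbf w)+(N\mathbf g-\nabla_\ell f_i(\mathbf w))^\top(\mathbf z-\mathbf w_\ell).$$ Step sizes. $0<\gamma^t\le1$, $\gamma^{t+1}\le\gamma^t$, $\sum_t\gamma^t=\infty$, $\sum_t(\gamma^t)^2<\infty$. Algorithm. Agent $i$ holds $\mathbf x_{(i,:)}^t=(\mathbf x_{(i,\ell)}^t)_\ell$, $\mathbf y_{(i,:)}^t=(\mathbf y_{(i,\ell)}^t)_\ell$ in $\mathbb R^{dB}$ and scalars $\phi_{(i,\ell)}^t$. Initialization: $\mathbf x_{(i,:)}^0\in\mathcal K$ arbitrary, $\mathbf y_{(i,:)}^0=\nabla f_i(\mathbf x_{(i,:)}^0)$, $\phi_{(i,\ell)}^0=1$. At iteration $t$, each agent $i$: - computes $\tilde{\mathbf x}_{(i,\ell_i^t)}^t=\arg\min_{\mathbf z\in\mathcal K_{\ell_i^t}}\hat f_{i,\ell_i^t}(\mathbf z;\mathbf x_{(i,:)}^t,\mathbf y_{(i,\ell_i^t)}^t)+r_{\ell_i^t}(\mathbf z)$; - sets $\Delta\mathbf x_{(i,\ell)}^t=\tilde{\mathbf x}_{(i,\ell)}^t-\mathbf x_{(i,\ell)}^t$ if $\ell=\ell_i^t$ and $\Delta\mathbf x_{(i,\ell)}^t=\mathbf 0$ otherwise; - for every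 $\ell$ updates $$\phi_{(i,\ell)}^{t+1}=\sum_{j\in\mathcal N_{i,\ell}^t}a_{ij\ell}^t\phi_{(j,\ell)}^t,\qquad \mathbf x_{(i,\ell)}^{t+1}=\sum_{j\in\mathcal N_{i,\ell}^t}\frac{a_{ij\ell}^t\phi_{(j,\ell)}^t}{\phi_{(i,\ell)}^{t+1}}\big(\mathbf x_{(j,\ell)}^t+\gamma^t\Delta\mathbf x_{(j,\ell)}^t\big),$$ $$\mathbf y_{(i,\ell)}^{t+1}=\sum_{j\in\mathcal N_{i,\ell}^t}\frac{a_{ij\ell}^t}{\phi_{(i,\ell)}^{t+1}}\Big(\phi_{(j,\ell)}^t\mathbf y_{(j,\ell)}^t+\nabla_\ell f_j(\mathbf x_{(j,:)}^{t+1})-\nabla_\ell f_j(\mathbf x_{(j,:)}^t)\Big).$$ Weighted average: $\bar{\mathbf s}^t=\frac1N\big(\sum_{i=1}^N\phi_{(i,\ell)}^t\mathbf x_{(i,\ell)}^t\big)_{\ell=1}^B$. *)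

theory Defs
  imports "HOL-Analysis.Analysis"
begin

text \<open>Block-structured vectors: a point of R^(dB) is an element of (real^'d)^'b,
  block l being x $ l. Agents are the elements of a finite type 'n (N = CARD('n)).\<close>

definition blockset :: "('b::finite \<Rightarrow> 'v set) \<Rightarrow> (('v::real_normed_vector)^'b) set" where
  "blockset K = {x. \<forall>l. x $ l \<in> K l}"

definition strongly_convex_with :: "'v::real_normed_vector set \<Rightarrow> real \<Rightarrow> ('v \<Rightarrow> real) \<Rightarrow> bool" where
  "strongly_convex_with S tau g \<longleftrightarrow> convex S \<and>
     (\<forall>u\<in>S. \<forall>v\<in>S. \<forall>\<theta>::real. 0 \<le> \<theta> \<and> \<theta> \<le> 1 \<longrightarrow>
        g (\<theta> *\<^sub>R u + (1 - \<theta>) *\<^sub>R v)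
          \<le> \<theta> * g u + (1 - \<theta>) * g v - tau / 2 * \<theta> * (1 - \<theta>) * (norm (u - v))\<^sup>2)"

definition bounded_subgradients_on :: "'v::real_inner set \<Rightarrow> ('v \<Rightarrow> real) \<Rightarrow> bool" where
  "bounded_subgradients_on S r \<longleftrightarrow>
     (\<exists>C. \<forall>z\<in>S. \<forall>g. (\<forall>w. r w \<ge> r z + inner g (w - z)) \<longrightarrow> norm g \<le> C)"

definition coercive_on :: "'v::real_normed_vector set \<Rightarrow> ('v \<Rightarrow> real) \<Rightarrow> bool" where
  "coercive_on S U \<longleftrightarrow> (\<forall>M. \<exists>R. \<forall>x\<in>S. norm x \<ge> R \<longrightarrow> U x \<ge> M)"

text \<open>N_{i,l}^t: in-neighbours of i (edge (j,i) means j \<rightarrow> i) selecting block l at time t, plus i.\<close>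
definition nbr :: "('n \<times> 'n) set \<Rightarrow> (nat \<Rightarrow> 'n \<Rightarrow> 'b) \<Rightarrow> nat \<Rightarrow> 'n \<Rightarrow> 'b \<Rightarrow> 'n set" where
  "nbr E sel t i l = {j. (j, i) \<in> E \<and> sel t j = l} \<union> {i}"

definition edges_blk :: "('n \<times> 'n) set \<Rightarrow> (nat \<Rightarrow> 'n \<Rightarrow> 'b) \<Rightarrow> nat \<Rightarrow> 'b \<Rightarrow> ('n \<times> 'n) set" where
  "edges_blk E sel t l = {(j, i). (j, i) \<in> E \<and> j \<in> nbr E sel t i l}"

end

theory Submission
  imports Defs "HOL-Analysis.Analysis"
begin

lemma subgradient_exists:
  fixes r :: "'a::euclidean_space \<Rightarrow> real"
  assumes cv: "convex_on UNIV r"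
  shows "\<exists>g. \<forall>w. r w \<ge> r p + inner g (w - p)"
proof -
  define S where "S = {z :: 'a \<times> real. r (fst z) \<le> snd z}"
  have convS: "convex S"
    unfolding S_def convex_def
  proof (clarsimp)
    fix a b :: 'a and s t u v :: real
    assume h: "r a \<le> s" "r b \<le> t" "0 \<le> u" "0 \<le> v" "u + v = 1"
    have "r (u *\<^sub>R a + v *\<^sub>R b) \<le> u * r a + v * r b"
      using cv h by (simp add: convex_on_def)
    also have "\<dots> \<le> u * s + v * t" using h by (intro add_mono mult_left_mono) auto
    finally show "r (u *\<^sub>R a + v *\<^sub>R b) \<le> u * s + v * t" .
  qed
  have inS: "(p, r p) \<in> S" by (simp add: S_def)
  have notri: "(p, r p) \<notin> rel_interior S"
  proof
    assume "(p, r p) \<in> rel_interior S"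
    then obtain e where e: "e > 0" "ball (p, r p) e \<inter> affine hull S \<subseteq> S"
      by (auto simp: rel_interior_ball)
    define q where "q = (p, r p - e/2)"
    have "q = 2 *\<^sub>R (p, r p) + (-1) *\<^sub>R (p, r p + e/2)"
      by (simp add: q_def algebra_simps scaleR_2)
    moreover have "(p, r p + e/2) \<in> affine hull S"
      by (rule hull_inc) (use e in \<open>simp add: S_def\<close>)
    moreover have "(p, r p) \<in> affine hull S" by (rule hull_inc[OF inS])
    ultimately have "q \<in> affine hull S"
      by (metis (no_types) affine_affine_hull mem_affine add.commute diff_add_cancel
          one_add_one uminus_add_conv_diff add_diff_cancel_left' diff_minus_eq_add)
    moreover have "q \<in> ball (p, r p) e"
      using e by (simp add: q_def dist_Pair_Pair dist_real_def)
    ultimately have "q \<in> S" using e by blast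
    then show False using e by (simp add: q_def S_def)
  qed
  obtain a where a0: "a \<noteq> 0" and ale: "\<And>y. y \<in> S \<Longrightarrow> a \<bullet> (p, r p) \<le> a \<bullet> y"
    using supporting_hyperplane_rel_boundary[OF convS inS notri] by metis
  obtain a1 a2 where aa: "a = (a1, a2)" by (cases a)
  have key: "a1 \<bullet> p + a2 * r p \<le> a1 \<bullet> v + a2 * s" if "r v \<le> s" for v s
    using ale[of "(v, s)"] that by (simp add: S_def aa inner_Pair)
  have a2nn: "a2 \<ge> 0"
  proof (rule ccontr)
    assume "\<not> a2 \<ge> 0"
    hence neg: "a2 < 0" by simp
    have "a1 \<bullet> p + a2 * r p \<le> a1 \<bullet> p + a2 * (r p + 1)" using key[of p "r p + 1"] by simp
    thus False using neg by (simp add: algebra_simps)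
  qed
  have a2pos: "a2 > 0"
  proof (rule ccontr)
    assume "\<not> a2 > 0"
    hence z: "a2 = 0" using a2nn by simp
    have "a1 \<bullet> p \<le> a1 \<bullet> (p - a1)" using key[of "p - a1" "r (p - a1)"] z by simp
    hence "a1 \<bullet> a1 \<le> 0" by (simp add: inner_diff_right)
    hence "a1 = 0" using inner_gt_zero_iff[of a1] by (metis not_le)
    thus False using a0 z aa by (simp add: zero_prod_def)
  qed
  show ?thesis
  proof (intro exI allI)
    fix w
    have "a1 \<bullet> p + a2 * r p \<le> a1 \<bullet> w + a2 * r w" using key[of w "r w"] by simp
    hence "a2 * r p - a1 \<bullet> (w - p) \<le> a2 * r w" by (simp add: inner_diff_right)
    hence "r p - (1/a2) * (a1 \<bullet> (w - p)) \<le> r w" using a2pos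
      by (simp add: field_simps)
    thus "r w \<ge> r p + inner (- (1/a2) *\<^sub>R a1) (w - p)" by simp
  qed
qed

lemma prox_bound:
  fixes F R :: "'v::euclidean_space \<Rightarrow> real"
  assumes sc: "strongly_convex_with S tau F" and tau: "tau > 0"
    and pS: "p \<in> S" and qS: "q \<in> S"
    and der: "(F has_derivative (\<lambda>h. inner g h)) (at p within S)"
    and Rcv: "convex_on UNIV R"
    and sg: "\<And>s. (\<forall>w. R w \<ge> R p + inner s (w - p)) \<Longrightarrow> norm s \<le> Cr"
    and sgex: "\<exists>s. \<forall>w. R w \<ge> R p + inner s (w - p)"
    and mn: "\<And>z. z \<in> S \<Longrightarrow> F q + inner c (q - p) + R q \<le> F z + inner c (z - p) + R z"
  shows "norm (q - p) \<le> 4 * (norm (g + c) + Cr) / tau"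
proof -
  define D where "D = norm (q - p)"
  have cS: "convex S" using sc by (simp add: strongly_convex_with_def)
  have scF: "\<And>u v \<theta>. u \<in> S \<Longrightarrow> v \<in> S \<Longrightarrow> 0 \<le> \<theta> \<Longrightarrow> \<theta> \<le> 1 \<Longrightarrow>
     F (\<theta> *\<^sub>R u + (1 - \<theta>) *\<^sub>R v) \<le> \<theta> * F u + (1 - \<theta>) * F v - tau / 2 * \<theta> * (1 - \<theta>) * (norm (u - v))\<^sup>2"
    using sc by (simp add: strongly_convex_with_def)
  define H where "H z = F z + inner c (z - p) + R z" for z
  define m where "m = (1/2) *\<^sub>R p + (1 - 1/2) *\<^sub>R q"
  have mS: "m \<in> S" unfolding m_def using cS pS qS by (rule convexD) auto
  have Fm: "F m \<le> 1/2 * F p + 1/2 * F q - tau / 8 * D\<^sup>2"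
    using scF[OF pS qS, of "1/2"] by (simp add: m_def D_def norm_minus_commute)
  have Rm: "R m \<le> 1/2 * R p + 1/2 * R q"
    using convex_onD[OF Rcv, of "1/2" p q] unfolding m_def by simp
  have Lm: "inner c (m - p) = 1/2 * inner c (p - p) + 1/2 * inner c (q - p)"
    by (simp add: m_def inner_diff_right inner_add_right algebra_simps)
  have "H q \<le> H m" using mn[OF mS] by (simp add: H_def)
  hence A: "tau / 4 * D\<^sup>2 \<le> H p - H q"
    using Fm Rm Lm by (simp add: H_def algebra_simps)
  have tanF: "F q - F p \<ge> inner g (q - p)"
  proof -
    define phi where "phi \<theta> = F (p + \<theta> *\<^sub>R (q - p))" for \<theta> :: real
    have pathS: "(\<lambda>\<theta>::real. p + \<theta> *\<^sub>R (q - p)) ` {0..1} \<subseteq> S"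
    proof clarsimp
      fix \<theta> :: real assume "0 \<le> \<theta>" "\<theta> \<le> 1"
      hence "\<theta> *\<^sub>R q + (1 - \<theta>) *\<^sub>R p \<in> S" using cS pS qS by (intro convexD) auto
      thus "p + \<theta> *\<^sub>R (q - p) \<in> S" by (simp add: algebra_simps)
    qed
    have d1: "((\<lambda>\<theta>::real. p + \<theta> *\<^sub>R (q - p)) has_derivative (\<lambda>h. h *\<^sub>R (q - p))) (at 0 within {0..1})"
      by (auto intro!: derivative_eq_intros)
    have d2: "(F has_derivative (\<lambda>h. inner g h)) (at ((\<lambda>\<theta>::real. p + \<theta> *\<^sub>R (q - p)) 0) within ((\<lambda>\<theta>::real. p + \<theta> *\<^sub>R (q - p)) ` {0..1}))"
      using has_derivative_subset[OF der pathS] by simp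
    have "(phi has_derivative (\<lambda>h. inner g (h *\<^sub>R (q - p)))) (at 0 within {0..1})"
      using has_derivative_in_compose[OF d1 d2] unfolding phi_def by simp
    hence "(phi has_field_derivative inner g (q - p)) (at 0 within {0..1})"
      unfolding has_field_derivative_def by (simp add: mult.commute[of _ "g \<bullet> (q - p)"])
    hence lim: "((\<lambda>y. (phi y - phi 0) / (y - 0)) \<longlongrightarrow> inner g (q - p)) (at 0 within {0..1})"
      by (simp add: has_field_derivative_iff)
    have ev: "eventually (\<lambda>y. (phi y - phi 0) / (y - 0) \<le> F q - F p) (at 0 within {0..1::real})"
      unfolding eventually_at_filter
    proof (intro always_eventually allI impI)
      fix y :: real assume y: "y \<noteq> 0" "y \<in> {0..1}"
      have nn: "0 \<le> tau / 2 * y * (1 - y) * (norm (q - p))\<^sup>2" using y tau by simp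
      have "F (y *\<^sub>R q + (1 - y) *\<^sub>R p) \<le> y * F q + (1 - y) * F p"
        using scF[OF qS pS, of y] y nn by auto
      hence "phi y - phi 0 \<le> y * (F q - F p)" by (simp add: phi_def algebra_simps)
      thus "(phi y - phi 0) / (y - 0) \<le> F q - F p" using y by (simp add: divide_le_eq mult.commute)
    qed
    have nb: "at (0::real) within {0..1} \<noteq> bot"
      by (simp add: at_within_Icc_at_right)
    show ?thesis using tendsto_upperbound[OF lim ev nb] .
  qed
  obtain s where s: "\<forall>w. R w \<ge> R p + inner s (w - p)" using sgex by blast
  have ns: "norm s \<le> Cr" using sg[OF s] .
  have tanR: "R q - R p \<ge> inner s (q - p)" using spec[OF s, of q] by linarith
  have "H p - H q = (F p - F q) + inner c (p - q) + (R p - R q)"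
    by (simp add: H_def inner_diff_right)
  also have "\<dots> \<le> inner g (p - q) + inner c (p - q) + inner s (p - q)"
    using tanF tanR by (simp add: inner_diff_right)
  also have "\<dots> = inner (g + c + s) (p - q)" by (simp add: inner_add_left)
  also have "\<dots> \<le> norm (g + c + s) * D"
    using norm_cauchy_schwarz[of "g+c+s" "p - q"] by (simp add: D_def norm_minus_commute)
  also have "\<dots> \<le> (norm (g + c) + Cr) * D"
    by (intro mult_right_mono) (use norm_triangle_ineq[of "g+c" s] ns in \<open>auto simp: D_def\<close>)
  finally have "tau / 4 * D\<^sup>2 \<le> (norm (g + c) + Cr) * D" using A by linarith
  hence "tau / 4 * D \<le> norm (g + c) + Cr" if "D > 0"
    using that by (simp add: power2_eq_square)
  moreover have "0 \<le> norm (g + c) + Cr" using ns by (smt (verit) norm_ge_zero)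
  ultimately have "tau / 4 * D \<le> norm (g + c) + Cr"
    by (cases "D > 0") (auto simp: D_def)
  thus ?thesis using tau by (simp add: D_def field_simps)
qed

definition mmul :: "('n::finite \<Rightarrow> 'n \<Rightarrow> real) \<Rightarrow> ('n \<Rightarrow> 'n \<Rightarrow> real) \<Rightarrow> 'n \<Rightarrow> 'n \<Rightarrow> real" where
  "mmul A B i j = (\<Sum>k\<in>UNIV. A i k * B k j)"

definition idm :: "'n \<Rightarrow> 'n \<Rightarrow> real" where
  "idm i j = (if i = j then 1 else 0)"

fun Mp :: "(nat \<Rightarrow> 'n::finite \<Rightarrow> 'n \<Rightarrow> real) \<Rightarrow> nat \<Rightarrow> nat \<Rightarrow> 'n \<Rightarrow> 'n \<Rightarrow> real" where
  "Mp P s 0 = idm"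
| "Mp P s (Suc t) = (if s \<le> t then mmul (P t) (Mp P s t) else idm)"

definition mv :: "('n::finite \<Rightarrow> 'n \<Rightarrow> real) \<Rightarrow> ('n \<Rightarrow> real) \<Rightarrow> 'n \<Rightarrow> real" where
  "mv A z i = (\<Sum>j\<in>UNIV. A i j * z j)"

lemma Mp_same[simp]: "Mp P s s = idm"
  by (cases s) auto

lemma Mp_Suc: "s \<le> t \<Longrightarrow> Mp P s (Suc t) = mmul (P t) (Mp P s t)"
  by simp

lemma Mp_nonneg:
  assumes "\<And>t i j. P t i j \<ge> 0"
  shows "Mp P s t i j \<ge> 0"
proof (induction t arbitrary: i j)
  case 0 thus ?case by (simp add: idm_def)
next
  case (Suc t) thus ?case using assms
    by (auto simp: mmul_def idm_def intro!: sum_nonneg mult_nonneg_nonneg)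
qed

lemma mv_idm[simp]: "mv idm z = z"
proof (rule ext)
  fix i
  have "mv idm z i = (\<Sum>j\<in>UNIV. if i = j then z j else 0)"
    unfolding mv_def idm_def by (intro sum.cong) auto
  thus "mv idm z i = z i" by simp
qed

lemma mv_mmul: "mv (mmul A B) z = mv A (mv B z)"
proof (rule ext)
  fix i
  have "mv (mmul A B) z i = (\<Sum>j\<in>UNIV. \<Sum>k\<in>UNIV. A i k * B k j * z j)"
    unfolding mv_def mmul_def by (simp add: sum_distrib_right)
  also have "\<dots> = (\<Sum>k\<in>UNIV. \<Sum>j\<in>UNIV. A i k * B k j * z j)" by (rule sum.swap)
  also have "\<dots> = mv A (mv B z) i"
    unfolding mv_def by (simp add: sum_distrib_left mult.assoc)
  finally show "mv (mmul A B) z i = mv A (mv B z) i" .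
qed

lemma mmul_assoc: "mmul (mmul A B) C = mmul A (mmul B C)"
proof (intro ext)
  fix i j
  have "mmul (mmul A B) C i j = (\<Sum>m\<in>UNIV. \<Sum>k\<in>UNIV. A i k * B k m * C m j)"
    unfolding mmul_def by (simp add: sum_distrib_right)
  also have "\<dots> = (\<Sum>k\<in>UNIV. \<Sum>m\<in>UNIV. A i k * B k m * C m j)" by (rule sum.swap)
  also have "\<dots> = mmul A (mmul B C) i j"
    unfolding mmul_def by (simp add: sum_distrib_left mult.assoc)
  finally show "mmul (mmul A B) C i j = mmul A (mmul B C) i j" .
qed

lemma mmul_idm_right[simp]: "mmul A idm = A"
proof (intro ext)
  fix i j
  have "mmul A idm i j = (\<Sum>k\<in>UNIV. if k = j then A i k else 0)"
    unfolding mmul_def idm_def by (intro sum.cong) auto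
  thus "mmul A idm i j = A i j" by simp
qed

lemma mmul_idm_left[simp]: "mmul idm A = A"
proof (intro ext)
  fix i j
  have "mmul idm A i j = (\<Sum>k\<in>UNIV. if i = k then A k j else 0)"
    unfolding mmul_def idm_def by (intro sum.cong) auto
  thus "mmul idm A i j = A i j" by simp
qed

lemma Mp_comp: "u \<le> v \<Longrightarrow> v \<le> t \<Longrightarrow> Mp P u t = mmul (Mp P v t) (Mp P u v)"
proof (induction t)
  case 0 thus ?case by simp
next
  case (Suc t)
  show ?case
  proof (cases "v = Suc t")
    case True thus ?thesis by simp
  next
    case False
    hence "v \<le> t" using Suc by simp
    thus ?thesis using Suc by (simp add: mmul_assoc)
  qed
qed

lemma mv_add: "mv A (\<lambda>j. z j + w j) = (\<lambda>i. mv A z i + mv A w i)"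
  by (rule ext) (simp add: mv_def distrib_left sum.distrib)

lemma mv_sum: "mv A (\<lambda>j. \<Sum>u\<in>U. w u j) = (\<lambda>i. \<Sum>u\<in>U. mv A (w u) i)"
proof (rule ext)
  fix i
  have "mv A (\<lambda>j. \<Sum>u\<in>U. w u j) i = (\<Sum>j\<in>UNIV. \<Sum>u\<in>U. A i j * w u j)"
    by (simp add: mv_def sum_distrib_left)
  also have "\<dots> = (\<Sum>u\<in>U. \<Sum>j\<in>UNIV. A i j * w u j)" by (rule sum.swap)
  finally show "mv A (\<lambda>j. \<Sum>u\<in>U. w u j) i = (\<Sum>u\<in>U. mv A (w u) i)" by (simp add: mv_def)
qed

lemma decomp:
  assumes rec: "\<And>t. z (Suc t) = mv (P t) (\<lambda>j. z t j + e t j)"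
  shows "z t = (\<lambda>i. mv (Mp P 0 t) (z 0) i + (\<Sum>u<t. mv (Mp P u t) (e u) i))"
proof (induction t)
  case 0 thus ?case by simp
next
  case (Suc t)
  have "z (Suc t) = mv (P t) (\<lambda>j. (mv (Mp P 0 t) (z 0) j + (\<Sum>u<t. mv (Mp P u t) (e u) j)) + e t j)"
    using rec Suc by simp
  also have "\<dots> = (\<lambda>i. mv (P t) (mv (Mp P 0 t) (z 0)) i + (\<Sum>u<t. mv (P t) (mv (Mp P u t) (e u)) i) + mv (P t) (e t) i)"
    by (simp add: mv_add mv_sum)
  also have "\<dots> = (\<lambda>i. mv (Mp P 0 (Suc t)) (z 0) i + (\<Sum>u<Suc t. mv (Mp P u (Suc t)) (e u) i))"
  proof -
    have "\<And>u. u < t \<Longrightarrow> Mp P u (Suc t) = mmul (P t) (Mp P u t)" by simp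
    hence "(\<Sum>u<t. mv (P t) (mv (Mp P u t) (e u)) i) = (\<Sum>u<t. mv (Mp P u (Suc t)) (e u) i)" for i
      by (intro sum.cong) (auto simp: mv_mmul)
    moreover have "Mp P t (Suc t) = P t" by simp
    ultimately show ?thesis by (auto simp: mv_mmul)
  qed
  finally show ?case .
qed

context
  fixes P :: "nat \<Rightarrow> 'n::finite \<Rightarrow> 'n \<Rightarrow> real" and c :: real
  assumes nn: "\<And>t i j. P t i j \<ge> 0" and c0: "c \<ge> 0" and diag: "\<And>t i. P t i i \<ge> c"
begin

lemma reach_step:
  assumes "s \<le> t" and hk: "Mp P s t k j \<ge> c ^ (t - s)" and pk: "P t i k \<ge> c"
  shows "Mp P s (Suc t) i j \<ge> c ^ (Suc t - s)"
proof -
  have "Mp P s (Suc t) i j = (\<Sum>m\<in>UNIV. P t i m * Mp P s t m j)"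
    using \<open>s \<le> t\<close> by (simp add: mmul_def)
  also have "\<dots> \<ge> P t i k * Mp P s t k j"
    by (rule member_le_sum) (auto intro!: mult_nonneg_nonneg nn Mp_nonneg)
  finally have "Mp P s (Suc t) i j \<ge> P t i k * Mp P s t k j" .
  moreover have "P t i k * Mp P s t k j \<ge> c * c ^ (t - s)"
    using hk pk c0 by (intro mult_mono) auto
  moreover have "c * c ^ (t - s) = c ^ (Suc t - s)" using \<open>s \<le> t\<close>
    by (simp add: Suc_diff_le)
  ultimately show ?thesis by linarith
qed

lemma reach_mono:
  assumes "s \<le> t" and hk: "Mp P s t i j \<ge> c ^ (t - s)" and "t \<le> t'"
  shows "Mp P s t' i j \<ge> c ^ (t' - s)"
  using \<open>t \<le> t'\<close>
proof (induction t')
  case 0 thus ?case using hk by simp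
next
  case (Suc t')
  show ?case
  proof (cases "t = Suc t'")
    case True thus ?thesis using hk by simp
  next
    case False
    hence tt: "t \<le> t'" using Suc by simp
    hence h: "Mp P s t' i j \<ge> c ^ (t' - s)" using Suc by simp
    have st': "s \<le> t'" using \<open>s \<le> t\<close> tt by simp
    show ?thesis by (rule reach_step[OF st' h diag])
  qed
qed

end

lemma window_pos:
  fixes E :: "('n::finite \<times> 'n) set"
  assumes nn: "\<And>t i j. P t i j \<ge> 0" and c: "c > 0"
    and act_diag: "\<And>t i. act t i i"
    and actP: "\<And>t i j. act t i j \<Longrightarrow> P t i j \<ge> c"
    and hop: "\<And>k i t. (k, i) \<in> E \<Longrightarrow> \<exists>u<T. act (t + u) i k"
    and strong: "\<And>i j. (i, j) \<in> E\<^sup>*"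
  shows "\<exists>W>0. (\<forall>s i j. Mp P s (s + W) i j \<ge> c ^ W)"
proof -
  have diag: "\<And>t i. P t i i \<ge> c" using actP act_diag by blast
  have c0: "c \<ge> 0" using c by simp
  note RS = reach_step[of P c, OF nn c0 diag]
  note RM = reach_mono[of P c, OF nn c0 diag]
  have path: "(j, i) \<in> E ^^ n \<Longrightarrow> Mp P s (s + n * T) i j \<ge> c ^ (n * T)" for n i j s
  proof (induction n arbitrary: i)
    case 0 thus ?case by (simp add: idm_def)
  next
    case (Suc n)
    from Suc.prems obtain k where jk: "(j, k) \<in> E ^^ n" and ki: "(k, i) \<in> E"
      by (rule relpow_Suc_E)
    have hk: "Mp P s (s + n * T) k j \<ge> c ^ (s + n * T - s)" using Suc.IH[OF jk] by simp
    obtain u where u: "u < T" "act (s + n * T + u) i k" using hop[OF ki] by blast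
    have le0: "s \<le> s + n * T" "s + n * T \<le> s + n * T + u" by arith+
    have h1: "Mp P s (s + n * T + u) k j \<ge> c ^ (s + n * T + u - s)"
      by (rule RM[OF le0(1) hk le0(2)])
    have le1: "s \<le> s + n * T + u" by arith
    have h2: "Mp P s (Suc (s + n * T + u)) i j \<ge> c ^ (Suc (s + n * T + u) - s)"
      by (rule RS[OF le1 h1 actP[OF u(2)]])
    have le1': "s \<le> Suc (s + n * T + u)" by arith
    have le2: "Suc (s + n * T + u) \<le> s + Suc n * T" using u(1) by (simp add: algebra_simps)
    have "Mp P s (s + Suc n * T) i j \<ge> c ^ (s + Suc n * T - s)"
      by (rule RM[OF le1' h2 le2])
    thus ?case by simp
  qed
  define nf where "nf = (\<lambda>(j, i). SOME n. (j, i) \<in> E ^^ n)"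
  have nf: "(j, i) \<in> E ^^ nf (j, i)" for i j
  proof -
    have "\<exists>n. (j, i) \<in> E ^^ n" using strong[of j i] by (simp add: rtrancl_power)
    hence "(j, i) \<in> E ^^ (SOME n. (j, i) \<in> E ^^ n)" by (rule someI_ex)
    thus ?thesis by (simp add: nf_def)
  qed
  define W where "W = Max (range nf) * T + 1"
  have "Mp P s (s + W) i j \<ge> c ^ W" for s i j
  proof -
    have h: "Mp P s (s + nf (j, i) * T) i j \<ge> c ^ (s + nf (j, i) * T - s)" using path[OF nf] by simp
    have le: "s + nf (j, i) * T \<le> s + W"
    proof -
      have "nf (j, i) \<le> Max (range nf)" by simp
      hence "nf (j, i) * T \<le> Max (range nf) * T" by (rule mult_le_mono1)
      thus ?thesis unfolding W_def by linarith
    qed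
    have "Mp P s (s + W) i j \<ge> c ^ (s + W - s)"
      by (rule RM[OF _ h le]) simp
    thus ?thesis by simp
  qed
  moreover have "W > 0" by (simp add: W_def)
  ultimately show ?thesis by blast
qed

definition sp :: "('n::finite \<Rightarrow> real) \<Rightarrow> real" where
  "sp z = Max ((\<lambda>(i, j). z i - z j) ` UNIV)"

lemma sp_ge: "z i - z j \<le> sp z"
  unfolding sp_def by (rule Max_ge) (auto intro: image_eqI[of _ _ "(i, j)"])

lemma sp_le: "(\<And>i j. z i - z j \<le> B) \<Longrightarrow> sp z \<le> B"
  unfolding sp_def by (subst Max_le_iff) auto

lemma sp_nonneg: "0 \<le> sp z"
  using sp_ge[of z undefined undefined] by simp

lemma sp_add: "sp (\<lambda>i. z i + w i) \<le> sp z + sp w"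
proof (rule sp_le)
  fix i j show "z i + w i - (z j + w j) \<le> sp z + sp w"
    using sp_ge[of z i j] sp_ge[of w i j] by linarith
qed

lemma sp_sum: "finite U \<Longrightarrow> sp (\<lambda>i. \<Sum>u\<in>U. w u i) \<le> (\<Sum>u\<in>U. sp (w u))"
proof (induction U rule: finite_induct)
  case empty thus ?case by (simp add: sp_def)
next
  case (insert x F)
  have "sp (\<lambda>i. \<Sum>u\<in>insert x F. w u i) = sp (\<lambda>i. w x i + (\<Sum>u\<in>F. w u i))"
    using insert by simp
  also have "\<dots> \<le> sp (w x) + sp (\<lambda>i. \<Sum>u\<in>F. w u i)" by (rule sp_add)
  also have "\<dots> \<le> sp (w x) + (\<Sum>u\<in>F. sp (w u))" using insert by simp
  finally show ?case using insert by simp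
qed

lemma sp_abs: "(\<And>j. \<bar>w j\<bar> \<le> B) \<Longrightarrow> sp w \<le> 2 * B"
proof (rule sp_le)
  fix i j assume "\<And>j. \<bar>w j\<bar> \<le> B"
  from this[of i] this[of j] show "w i - w j \<le> 2 * B" by linarith
qed

lemma extrema:
  fixes z :: "'n::finite \<Rightarrow> real"
  obtains a b where "\<And>j. z b \<le> z j" "\<And>j. z j \<le> z a" "z a - z b = sp z"
proof -
  have "Max (range z) \<in> range z" by (rule Max_in) auto
  then obtain a where a: "z a = Max (range z)" by (metis rangeE)
  have "Min (range z) \<in> range z" by (rule Min_in) auto
  then obtain b where b: "z b = Min (range z)" by (metis rangeE)
  have 1: "\<And>j. z b \<le> z j" using b by simp
  have 2: "\<And>j. z j \<le> z a" using a by simp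
  have "z a - z b = sp z"
    using sp_ge[of z a b] sp_le[of z "z a - z b"] 1 2 by (smt (verit))
  thus ?thesis using that 1 2 by blast
qed

definition rs :: "('n::finite \<Rightarrow> 'n \<Rightarrow> real) \<Rightarrow> bool" where
  "rs Q \<longleftrightarrow> (\<forall>i j. Q i j \<ge> 0) \<and> (\<forall>i. (\<Sum>j\<in>UNIV. Q i j) = 1)"

lemma mv_le: "rs Q \<Longrightarrow> (\<And>j. z j \<le> b) \<Longrightarrow> mv Q z i \<le> b"
proof -
  assume q: "rs Q" and zb: "\<And>j. z j \<le> b"
  have "mv Q z i \<le> (\<Sum>j\<in>UNIV. Q i j * b)"
    unfolding mv_def using q zb by (intro sum_mono mult_left_mono) (auto simp: rs_def)
  also have "\<dots> = b" using q by (simp add: rs_def sum_distrib_right[symmetric])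
  finally show ?thesis .
qed

lemma mv_ge: "rs Q \<Longrightarrow> (\<And>j. b \<le> z j) \<Longrightarrow> b \<le> mv Q z i"
proof -
  assume q: "rs Q" and zb: "\<And>j. b \<le> z j"
  have "b = (\<Sum>j\<in>UNIV. Q i j * b)" using q by (simp add: rs_def sum_distrib_right[symmetric])
  also have "\<dots> \<le> mv Q z i"
    unfolding mv_def using q zb by (intro sum_mono mult_left_mono) (auto simp: rs_def)
  finally show ?thesis .
qed

lemma sp_mv: "rs Q \<Longrightarrow> sp (mv Q z) \<le> sp z"
proof -
  assume q: "rs Q"
  obtain a b where ab: "\<And>j. z b \<le> z j" "\<And>j. z j \<le> z a" "z a - z b = sp z" using extrema[of z] by metis
  show ?thesis
  proof (rule sp_le)
    fix i k
    have "mv Q z i \<le> z a" by (rule mv_le[OF q ab(2)])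
    moreover have "z b \<le> mv Q z k" by (rule mv_ge[OF q ab(1)])
    ultimately show "mv Q z i - mv Q z k \<le> sp z" using ab(3) by linarith
  qed
qed

lemma sp_contract:
  fixes Q :: "'n::finite \<Rightarrow> 'n \<Rightarrow> real"
  assumes q: "rs Q" and eta: "\<And>i j. Q i j \<ge> \<eta>" and e0: "\<eta> \<ge> 0"
  shows "sp (mv Q z) \<le> (1 - real CARD('n) * \<eta>) * sp z"
proof -
  obtain a b where ab: "\<And>j. z b \<le> z j" "\<And>j. z j \<le> z a" "z a - z b = sp z" using extrema[of z] by metis
  have rows: "\<And>i. (\<Sum>j\<in>UNIV. Q i j - \<eta>) = 1 - real CARD('n) * \<eta>"
    using q by (simp add: rs_def sum_subtractf)
  have split: "mv Q z i = (\<Sum>j\<in>UNIV. (Q i j - \<eta>) * z j) + \<eta> * (\<Sum>j\<in>UNIV. z j)" for i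
    by (simp add: mv_def algebra_simps sum.distrib sum_subtractf sum_distrib_left)
  show ?thesis
  proof (rule sp_le)
    fix i k
    have "(\<Sum>j\<in>UNIV. (Q i j - \<eta>) * z j) \<le> (\<Sum>j\<in>UNIV. (Q i j - \<eta>) * z a)"
      using eta ab by (intro sum_mono mult_left_mono) (auto simp: algebra_simps)
    also have "\<dots> = (1 - real CARD('n) * \<eta>) * z a" using rows by (simp add: sum_distrib_right[symmetric])
    finally have 1: "(\<Sum>j\<in>UNIV. (Q i j - \<eta>) * z j) \<le> (1 - real CARD('n) * \<eta>) * z a" .
    have "(1 - real CARD('n) * \<eta>) * z b = (\<Sum>j\<in>UNIV. (Q k j - \<eta>) * z b)"
      using rows by (simp add: sum_distrib_right[symmetric])
    also have "\<dots> \<le> (\<Sum>j\<in>UNIV. (Q k j - \<eta>) * z j)"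
      using eta ab by (intro sum_mono mult_left_mono) (auto simp: algebra_simps)
    finally have 2: "(1 - real CARD('n) * \<eta>) * z b \<le> (\<Sum>j\<in>UNIV. (Q k j - \<eta>) * z j)" .
    have "mv Q z i - mv Q z k \<le> (1 - real CARD('n) * \<eta>) * (z a - z b)"
      using 1 2 split[of i] split[of k] by (simp add: algebra_simps)
    thus "mv Q z i - mv Q z k \<le> (1 - real CARD('n) * \<eta>) * sp z" using ab(3) by simp
  qed
qed

lemma rs_mmul: "rs A \<Longrightarrow> rs B \<Longrightarrow> rs (mmul A B)"
proof -
  assume a: "rs A" and b: "rs B"
  have "(\<Sum>j\<in>UNIV. mmul A B i j) = 1" for i
  proof -
    have "(\<Sum>j\<in>UNIV. mmul A B i j) = (\<Sum>k\<in>UNIV. \<Sum>j\<in>UNIV. A i k * B k j)"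
      unfolding mmul_def by (rule sum.swap)
    also have "\<dots> = (\<Sum>k\<in>UNIV. A i k)" using b by (simp add: rs_def sum_distrib_left[symmetric])
    finally show ?thesis using a by (simp add: rs_def)
  qed
  moreover have "mmul A B i j \<ge> 0" for i j
    using a b unfolding mmul_def rs_def by (auto intro!: sum_nonneg)
  ultimately show ?thesis by (simp add: rs_def)
qed

lemma rs_idm: "rs idm"
  by (auto simp: rs_def idm_def)

lemma rs_Mp: "(\<And>t. rs (P t)) \<Longrightarrow> rs (Mp P s t)"
  by (induction t) (auto simp: rs_idm rs_mmul)

lemma mv_abs: "rs Q \<Longrightarrow> (\<And>j. \<bar>w j\<bar> \<le> B) \<Longrightarrow> \<bar>mv Q w i\<bar> \<le> B"
  using mv_le[of Q w B i] mv_ge[of Q "-B" w i] by (smt (verit))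

lemma win_contract:
  fixes P :: "nat \<Rightarrow> 'n::finite \<Rightarrow> 'n \<Rightarrow> real"
  assumes rsP: "\<And>t. rs (P t)" and win: "\<And>s i j. Mp P s (s + W) i j \<ge> \<eta>" and e0: "\<eta> \<ge> 0"
    and rho: "1 - real CARD('n) * \<eta> \<le> \<rho>" "0 \<le> \<rho>"
  shows "u + k * W \<le> t \<Longrightarrow> sp (mv (Mp P u t) w) \<le> \<rho> ^ k * sp w"
proof (induction k arbitrary: u w)
  case 0 thus ?case using sp_mv[OF rs_Mp[OF rsP]] by simp
next
  case (Suc k)
  have le: "u \<le> u + W" "u + W \<le> t" using Suc.prems by auto
  have "Mp P u t = mmul (Mp P (u + W) t) (Mp P u (u + W))" by (rule Mp_comp[OF le])
  hence "mv (Mp P u t) w = mv (Mp P (u + W) t) (mv (Mp P u (u + W)) w)" by (simp add: mv_mmul)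
  moreover have "sp (mv (Mp P (u + W) t) (mv (Mp P u (u + W)) w)) \<le> \<rho> ^ k * sp (mv (Mp P u (u + W)) w)"
  proof -
    have "u + W + k * W \<le> t" using Suc.prems by (simp add: algebra_simps)
    from Suc.IH[OF this] show ?thesis by simp
  qed
  moreover have "sp (mv (Mp P u (u + W)) w) \<le> (1 - real CARD('n) * \<eta>) * sp w"
    by (rule sp_contract[OF rs_Mp[OF rsP] win e0])
  moreover have "(1 - real CARD('n) * \<eta>) * sp w \<le> \<rho> * sp w"
    using rho sp_nonneg[of w] by (intro mult_right_mono) auto
  ultimately have "sp (mv (Mp P u t) w) \<le> \<rho> ^ k * (\<rho> * sp w)"
  proof -
    assume a1: "mv (Mp P u t) w = mv (Mp P (u + W) t) (mv (Mp P u (u + W)) w)"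
      and a2: "sp (mv (Mp P (u + W) t) (mv (Mp P u (u + W)) w)) \<le> \<rho> ^ k * sp (mv (Mp P u (u + W)) w)"
      and a3: "sp (mv (Mp P u (u + W)) w) \<le> (1 - real CARD('n) * \<eta>) * sp w"
      and a4: "(1 - real CARD('n) * \<eta>) * sp w \<le> \<rho> * sp w"
    have "\<rho> ^ k * sp (mv (Mp P u (u + W)) w) \<le> \<rho> ^ k * (\<rho> * sp w)"
      using a3 a4 rho(2) by (intro mult_left_mono) auto
    thus ?thesis using a1 a2 by simp
  qed
  thus ?case by (simp add: algebra_simps)
qed

lemma pow_div_bound:
  assumes W: "W > 0" and r: "0 < \<rho>" "\<rho> < 1"
  shows "\<rho> ^ (n div W) \<le> root W \<rho> ^ n / \<rho>"
proof -
  define l where "l = root W \<rho>"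
  have lW: "l ^ W = \<rho>" unfolding l_def using W r by (simp add: real_root_pow_pos2)
  have l0: "0 < l" unfolding l_def using W r by simp
  have l1: "l \<le> 1" unfolding l_def using W r by simp
  have "l ^ n = l ^ (W * (n div W) + n mod W)" by simp
  also have "\<dots> = (l ^ W) ^ (n div W) * l ^ (n mod W)" by (simp only: power_add power_mult)
  also have "\<dots> = \<rho> ^ (n div W) * l ^ (n mod W)" by (simp only: lW)
  also have "\<dots> \<ge> \<rho> ^ (n div W) * l ^ W"
    using r l0 l1 W by (intro mult_left_mono power_decreasing) (auto intro: less_imp_le)
  finally have "\<rho> ^ (n div W) * \<rho> \<le> l ^ n" using lW by simp
  thus ?thesis using r unfolding l_def by (simp add: field_simps)
qed

lemma consensus:
  fixes P :: "nat \<Rightarrow> 'n::finite \<Rightarrow> 'n \<Rightarrow> real"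
  assumes rsP: "\<And>t. rs (P t)" and W: "W > 0" and win: "\<And>s i j. Mp P s (s + W) i j \<ge> \<eta>"
    and eta: "\<eta> > 0"
    and rec: "\<And>t. z (Suc t) = mv (P t) (\<lambda>j. z t j + e t j)"
    and eb: "\<And>t j. \<bar>e t j\<bar> \<le> Eb t"
  shows "\<exists>C lam. 0 < lam \<and> lam < 1 \<and> 0 \<le> C \<and>
           (\<forall>t. sp (z t) \<le> C * lam ^ t + C * (\<Sum>u<t. lam ^ (t - u) * Eb u))"
proof -
  define \<rho> where "\<rho> = max (1 - real CARD('n) * \<eta>) (1/2)"
  have N1: "real CARD('n) \<ge> 1" by simp
  have r0: "0 < \<rho>" and r1: "\<rho> < 1"
    using eta N1 unfolding \<rho>_def by (auto simp: max_def)
  have rho: "1 - real CARD('n) * \<eta> \<le> \<rho>" "0 \<le> \<rho>" using r0 by (auto simp: \<rho>_def)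
  define lam where "lam = root W \<rho>"
  have l0: "0 < lam" and l1: "lam < 1" unfolding lam_def using W r0 r1 by auto
  define C where "C = (sp (z 0) + 2) / \<rho>"
  have C0: "0 \<le> C" unfolding C_def using r0 sp_nonneg[of "z 0"] by simp
  have Eb0: "\<And>t. 0 \<le> Eb t" using eb by (meson abs_ge_zero order_trans)
  have fl: "sp (mv (Mp P u t) w) \<le> lam ^ (t - u) / \<rho> * sp w" if "u \<le> t" for u t w
  proof -
    have "u + ((t - u) div W) * W \<le> t" using that div_mult_mod_eq[of "t - u" W] by linarith
    hence "sp (mv (Mp P u t) w) \<le> \<rho> ^ ((t - u) div W) * sp w"
      by (rule win_contract[OF rsP win less_imp_le[OF eta] rho])
    also have "\<dots> \<le> lam ^ (t - u) / \<rho> * sp w"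
      using pow_div_bound[OF W r0 r1, of "t - u"] sp_nonneg[of w]
      by (intro mult_right_mono) (auto simp: lam_def)
    finally show ?thesis .
  qed
  have "sp (z t) \<le> C * lam ^ t + C * (\<Sum>u<t. lam ^ (t - u) * Eb u)" for t
  proof -
    have zt: "z t = (\<lambda>i. mv (Mp P 0 t) (z 0) i + (\<Sum>u<t. mv (Mp P u t) (e u) i))"
      by (rule decomp[where z=z and P=P and e=e, OF rec])
    have "sp (z t) \<le> sp (mv (Mp P 0 t) (z 0)) + sp (\<lambda>i. \<Sum>u<t. mv (Mp P u t) (e u) i)"
      unfolding zt by (rule sp_add)
    also have "\<dots> \<le> sp (mv (Mp P 0 t) (z 0)) + (\<Sum>u<t. sp (mv (Mp P u t) (e u)))"
      using sp_sum[of "{..<t}" "\<lambda>u. mv (Mp P u t) (e u)"] by simp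
    also have "\<dots> \<le> C * lam ^ t + (\<Sum>u<t. C * (lam ^ (t - u) * Eb u))"
    proof (rule add_mono)
      have "sp (mv (Mp P 0 t) (z 0)) \<le> lam ^ (t - 0) / \<rho> * sp (z 0)" by (rule fl) simp
      also have "\<dots> \<le> C * lam ^ t"
        unfolding C_def using r0 l0 by (simp add: field_simps)
      finally show "sp (mv (Mp P 0 t) (z 0)) \<le> C * lam ^ t" .
      show "(\<Sum>u<t. sp (mv (Mp P u t) (e u))) \<le> (\<Sum>u<t. C * (lam ^ (t - u) * Eb u))"
      proof (rule sum_mono)
        fix u assume "u \<in> {..<t}"
        hence "sp (mv (Mp P u t) (e u)) \<le> lam ^ (t - u) / \<rho> * sp (e u)" by (intro fl) simp
        also have "\<dots> \<le> lam ^ (t - u) / \<rho> * (2 * Eb u)"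
          using sp_abs[of "e u" "Eb u"] eb l0 r0 by (intro mult_left_mono) auto
        also have "\<dots> \<le> C * (lam ^ (t - u) * Eb u)"
          unfolding C_def using r0 l0 Eb0[of u] sp_nonneg[of "z 0"]
          by (simp add: field_simps mult_right_mono)
        finally show "sp (mv (Mp P u t) (e u)) \<le> C * (lam ^ (t - u) * Eb u)" .
      qed
    qed
    finally show ?thesis by (simp add: sum_distrib_left)
  qed
  thus ?thesis using l0 l1 C0 by blast
qed

lemma conv_summable:
  fixes c :: "nat \<Rightarrow> real"
  assumes lam: "0 \<le> lam" "lam < 1" and c0: "\<And>t. 0 \<le> c t" and cs: "summable c"
  shows "summable (\<lambda>t. \<Sum>u<t. lam ^ (t - u) * c u)"
proof -
  have s1: "summable (\<lambda>k. norm (c k))" using cs c0 by simp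
  have s2: "summable (\<lambda>k. norm (lam ^ k))" using lam by simp
  have cp: "summable (\<lambda>k. \<Sum>i\<le>k. c i * lam ^ (k - i))"
    by (rule summable_Cauchy_product[OF s1 s2])
  show ?thesis
  proof (rule summable_comparison_test'[OF cp])
    fix n :: nat assume "n \<ge> 0"
    have nn: "0 \<le> (\<Sum>u<n. lam ^ (n - u) * c u)" using lam c0 by (intro sum_nonneg) auto
    have "(\<Sum>u<n. lam ^ (n - u) * c u) \<le> (\<Sum>u\<le>n. lam ^ (n - u) * c u)"
      using lam c0 by (intro sum_mono2) auto
    thus "norm (\<Sum>u<n. lam ^ (n - u) * c u) \<le> (\<Sum>i\<le>n. c i * lam ^ (n - i))"
      using nn by (simp add: mult.commute)
  qed
qed

lemma geo_bound:
  fixes lam :: real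
  assumes lam: "0 \<le> lam" "lam < 1"
  shows "(\<Sum>u<t. lam ^ (t - u)) \<le> 1 / (1 - lam)"
proof -
  have "(\<Sum>u<t. lam ^ (t - u)) = (\<Sum>u<t. (\<lambda>i. lam ^ Suc i) (t - Suc u))"
    by (intro sum.cong) (auto simp: Suc_diff_Suc)
  also have "\<dots> = (\<Sum>u<t. lam ^ Suc u)" by (rule sum.nat_diff_reindex)
  finally have eq: "(\<Sum>u<t. lam ^ (t - u)) = (\<Sum>u<t. lam ^ (Suc u))" .
  have "(\<Sum>u<t. lam ^ (Suc u)) \<le> (\<Sum>u<t. lam ^ u)"
    using lam by (intro sum_mono) (simp add: mult_left_le_one_le)
  also have "\<dots> = (1 - lam ^ t) / (1 - lam)" using lam by (simp add: sum_gp_strict)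
  also have "\<dots> \<le> 1 / (1 - lam)" using lam by (intro divide_right_mono) auto
  finally show ?thesis using eq by simp
qed

lemma analytic:
  fixes g err :: "nat \<Rightarrow> real"
  assumes lam: "0 < lam" "lam < 1" and gpos: "\<And>t. 0 < g t" and g1: "\<And>t. g t \<le> 1"
    and gmono: "\<And>t. g (Suc t) \<le> g t" and gsq: "summable (\<lambda>t. (g t)\<^sup>2)"
    and K: "0 \<le> K" and en: "\<And>t. 0 \<le> err t"
    and eb: "\<And>t. err t \<le> K * (lam ^ t + (\<Sum>u<t. lam ^ (t - u) * g u))"
  shows "(err \<longlonglongrightarrow> 0) \<and> summable (\<lambda>t. g t * err t) \<and> summable (\<lambda>t. (err t)\<^sup>2)"
proof -
  have dec: "decseq g" using gmono by (simp add: decseq_SucI)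
  have g2n: "\<And>t. 0 \<le> (g t)\<^sup>2" by simp
  have S1: "summable (\<lambda>t. \<Sum>u<t. lam ^ (t - u) * (g u)\<^sup>2)"
    by (rule conv_summable) (use lam gsq in auto)
  have Sl: "summable (\<lambda>t. lam ^ t)" using lam by simp
  have Sl2: "summable (\<lambda>t. (lam\<^sup>2) ^ t)" using lam by (simp add: power_less_one_iff)
  have A: "g t * (lam ^ t + (\<Sum>u<t. lam ^ (t - u) * g u)) \<le> lam ^ t + (\<Sum>u<t. lam ^ (t - u) * (g u)\<^sup>2)" for t
  proof -
    have "g t * lam ^ t \<le> lam ^ t" using g1[of t] lam by (simp add: mult_left_le_one_le)
    moreover have "g t * (\<Sum>u<t. lam ^ (t - u) * g u) \<le> (\<Sum>u<t. lam ^ (t - u) * (g u)\<^sup>2)"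
    proof -
      have "g t * (\<Sum>u<t. lam ^ (t - u) * g u) = (\<Sum>u<t. lam ^ (t - u) * g u * g t)"
        by (simp add: sum_distrib_left mult_ac)
      also have "\<dots> \<le> (\<Sum>u<t. lam ^ (t - u) * g u * g u)"
        using lam gpos dec by (intro sum_mono mult_left_mono) (auto simp: decseq_def less_imp_le)
      finally show ?thesis by (simp add: power2_eq_square mult_ac)
    qed
    ultimately show ?thesis by (simp add: distrib_left)
  qed
  have sumA: "summable (\<lambda>t. g t * err t)"
  proof (rule summable_comparison_test'[OF summable_add[OF Sl S1, THEN summable_mult[of _ K]]])
    fix n :: nat assume "n \<ge> 0"
    have "g n * err n \<le> g n * (K * (lam ^ n + (\<Sum>u<n. lam ^ (n - u) * g u)))"
      using eb gpos by (intro mult_left_mono) (auto simp: less_imp_le)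
    also have "\<dots> = K * (g n * (lam ^ n + (\<Sum>u<n. lam ^ (n - u) * g u)))" by simp
    also have "\<dots> \<le> K * (lam ^ n + (\<Sum>u<n. lam ^ (n - u) * (g u)\<^sup>2))"
      using A K by (intro mult_left_mono) auto
    finally show "norm (g n * err n) \<le> K * (lam ^ n + (\<Sum>u<n. lam ^ (n - u) * (g u)\<^sup>2))"
      using en gpos by (simp add: less_imp_le)
  qed
  have B: "(lam ^ t + (\<Sum>u<t. lam ^ (t - u) * g u))\<^sup>2
           \<le> 2 * (lam\<^sup>2) ^ t + 2 / (1 - lam) * (\<Sum>u<t. lam ^ (t - u) * (g u)\<^sup>2)" for t
  proof -
    define w where "w u = lam ^ (t - u)" for u
    have w0: "\<And>u. 0 \<le> w u" using lam by (simp add: w_def)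
    have CS: "(\<Sum>u<t. w u * g u)\<^sup>2 \<le> (\<Sum>u<t. w u) * (\<Sum>u<t. w u * (g u)\<^sup>2)"
    proof -
      have "(\<Sum>u<t. sqrt (w u) * (sqrt (w u) * g u))\<^sup>2
             \<le> (\<Sum>u<t. (sqrt (w u))\<^sup>2) * (\<Sum>u<t. (sqrt (w u) * g u)\<^sup>2)"
        by (rule Cauchy_Schwarz_ineq_sum)
      moreover have "\<And>u. sqrt (w u) * (sqrt (w u) * g u) = w u * g u"
        using w0 by (simp add: mult.assoc[symmetric])
      moreover have "\<And>u. (sqrt (w u) * g u)\<^sup>2 = w u * (g u)\<^sup>2"
        using w0 by (simp add: power_mult_distrib)
      ultimately show ?thesis using w0 by simp
    qed
    have geo: "(\<Sum>u<t. w u) \<le> 1 / (1 - lam)" unfolding w_def by (rule geo_bound) (use lam in auto)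
    have nn2: "0 \<le> (\<Sum>u<t. w u * (g u)\<^sup>2)" using w0 by (intro sum_nonneg) auto
    have "(lam ^ t + (\<Sum>u<t. w u * g u))\<^sup>2 \<le> 2 * (lam ^ t)\<^sup>2 + 2 * (\<Sum>u<t. w u * g u)\<^sup>2"
      by (smt (verit) power2_diff zero_le_power2 power2_sum)
    also have "\<dots> \<le> 2 * (lam\<^sup>2) ^ t + 2 * ((1 / (1 - lam)) * (\<Sum>u<t. w u * (g u)\<^sup>2))"
    proof -
      have "(\<Sum>u<t. w u * g u)\<^sup>2 \<le> (1 / (1 - lam)) * (\<Sum>u<t. w u * (g u)\<^sup>2)"
        using CS geo nn2 by (meson mult_right_mono order_trans)
      thus ?thesis by (simp add: power_mult[symmetric] power_mult_distrib mult.commute)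
    qed
    finally show ?thesis by (simp add: w_def)
  qed
  have sumB: "summable (\<lambda>t. (err t)\<^sup>2)"
  proof (rule summable_comparison_test'[OF summable_mult[OF summable_add[OF summable_mult[OF Sl2, of 2] summable_mult[OF S1, of "2 / (1 - lam)"]], of "K\<^sup>2"]])
    fix n :: nat assume "n \<ge> 0"
    have "(err n)\<^sup>2 \<le> (K * (lam ^ n + (\<Sum>u<n. lam ^ (n - u) * g u)))\<^sup>2"
      using eb[of n] en[of n] by (intro power_mono) auto
    also have "\<dots> = K\<^sup>2 * (lam ^ n + (\<Sum>u<n. lam ^ (n - u) * g u))\<^sup>2" by (simp add: power_mult_distrib)
    also have "\<dots> \<le> K\<^sup>2 * (2 * (lam\<^sup>2) ^ n + 2 / (1 - lam) * (\<Sum>u<n. lam ^ (n - u) * (g u)\<^sup>2))"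
      using B by (intro mult_left_mono) auto
    finally show "norm ((err n)\<^sup>2) \<le> K\<^sup>2 * (2 * (lam\<^sup>2) ^ n + 2 / (1 - lam) * (\<Sum>u<n. lam ^ (n - u) * (g u)\<^sup>2))"
      by simp
  qed
  have "(\<lambda>t. (err t)\<^sup>2) \<longlonglongrightarrow> 0" using summable_LIMSEQ_zero[OF sumB] .
  hence "(\<lambda>t. sqrt ((err t)\<^sup>2)) \<longlonglongrightarrow> sqrt 0" by (rule tendsto_real_sqrt)
  hence "err \<longlonglongrightarrow> 0" using en by simp
  thus ?thesis using sumA sumB by simp
qed

lemma lin_rec:
  assumes rec: "\<And>t. z (Suc t) = mv (P t) (z t)"
  shows "s \<le> t \<Longrightarrow> z t = mv (Mp P s t) (z s)"
proof (induction t)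
  case 0 thus ?case by simp
next
  case (Suc t)
  show ?case
  proof (cases "s = Suc t")
    case True thus ?thesis by simp
  next
    case False
    hence "s \<le> t" using Suc by simp
    thus ?thesis using Suc rec[of t] by (simp add: mv_mmul)
  qed
qed

lemma avg_dev:
  fixes w z :: "'n::finite \<Rightarrow> real"
  assumes w0: "\<And>j. 0 \<le> w j" and ws: "(\<Sum>j\<in>UNIV. w j) = real CARD('n)"
  shows "\<bar>z i - (1 / real CARD('n)) * (\<Sum>j\<in>UNIV. w j * z j)\<bar> \<le> sp z"
proof -
  define N where "N = real CARD('n)"
  have N0: "N > 0" by (simp add: N_def)
  have eq: "z i - (1 / N) * (\<Sum>j\<in>UNIV. w j * z j) = (1 / N) * (\<Sum>j\<in>UNIV. w j * (z i - z j))"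
    using ws N0 unfolding N_def[symmetric]
    by (simp add: field_simps sum_subtractf sum_distrib_left sum_distrib_right[symmetric])
  have "\<bar>\<Sum>j\<in>UNIV. w j * (z i - z j)\<bar> \<le> (\<Sum>j\<in>UNIV. w j * sp z)"
  proof -
    have "\<bar>\<Sum>j\<in>UNIV. w j * (z i - z j)\<bar> \<le> (\<Sum>j\<in>UNIV. \<bar>w j * (z i - z j)\<bar>)" by (rule sum_abs)
    also have "\<dots> \<le> (\<Sum>j\<in>UNIV. w j * sp z)"
    proof (rule sum_mono)
      fix j
      have "\<bar>z i - z j\<bar> \<le> sp z" using sp_ge[of z i j] sp_ge[of z j i] by linarith
      thus "\<bar>w j * (z i - z j)\<bar> \<le> w j * sp z" using w0[of j] by (simp add: abs_mult mult_left_mono)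
    qed
    finally show ?thesis .
  qed
  also have "\<dots> = N * sp z" using ws by (simp add: N_def sum_distrib_right[symmetric])
  finally have "\<bar>\<Sum>j\<in>UNIV. w j * (z i - z j)\<bar> \<le> N * sp z" .
  thus ?thesis unfolding N_def[symmetric] eq using N0 by (simp add: abs_mult field_simps)
qed

lemma norm_cart2:
  fixes v :: "(real^'d::finite)^'b::finite"
  shows "norm v \<le> (\<Sum>l\<in>UNIV. \<Sum>k\<in>UNIV. \<bar>v $ l $ k\<bar>)"
proof -
  have "norm v \<le> (\<Sum>l\<in>UNIV. norm (v $ l))"
    unfolding norm_vec_def by (rule L2_set_le_sum) simp
  also have "\<dots> \<le> (\<Sum>l\<in>UNIV. \<Sum>k\<in>UNIV. \<bar>v $ l $ k\<bar>)"
    by (intro sum_mono norm_le_l1_cart)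
  finally show ?thesis .
qed

lemma sum_nbr_univ:
  fixes F :: "'n::finite \<Rightarrow> 'v::comm_monoid_add"
  assumes "\<And>j. j \<notin> A \<Longrightarrow> F j = 0"
  shows "(\<Sum>j\<in>A. F j) = (\<Sum>j\<in>UNIV. F j)"
  by (rule sum.mono_neutral_left) (use assms in auto)

theorem mainTheorem5:
  fixes f :: "'n::finite \<Rightarrow> (real^'d::finite)^'b::finite \<Rightarrow> real"
    and gradf :: "'n \<Rightarrow> (real^'d)^'b \<Rightarrow> (real^'d)^'b"
    and L :: "'n \<Rightarrow> real"
    and r :: "'b \<Rightarrow> real^'d \<Rightarrow> real"
    and K :: "'b \<Rightarrow> (real^'d) set"
    and E :: "('n \<times> 'n) set"
    and sel :: "nat \<Rightarrow> 'n \<Rightarrow> 'b"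
    and a :: "nat \<Rightarrow> 'b \<Rightarrow> 'n \<Rightarrow> 'n \<Rightarrow> real"
    and \<kappa> :: real
    and ftil :: "'n \<Rightarrow> 'b \<Rightarrow> real^'d \<Rightarrow> (real^'d)^'b \<Rightarrow> real"
    and gftil :: "'n \<Rightarrow> 'b \<Rightarrow> real^'d \<Rightarrow> (real^'d)^'b \<Rightarrow> real^'d"
    and tau :: "'n \<Rightarrow> real"
    and gamma :: "nat \<Rightarrow> real"
    and x y :: "nat \<Rightarrow> 'n \<Rightarrow> (real^'d)^'b"
    and phi :: "nat \<Rightarrow> 'n \<Rightarrow> 'b \<Rightarrow> real"
    and xtil :: "nat \<Rightarrow> 'n \<Rightarrow> real^'d"
  defines "Kset \<equiv> blockset K"
  (* problem assumptions *)
  assumes K_ne: "\<And>l. K l \<noteq> {}"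
    and K_closed: "\<And>l. closed (K l)"
    and K_convex: "\<And>l. convex (K l)"
    and f_C1: "\<And>i. \<exists>Op. open Op \<and> Kset \<subseteq> Op \<and>
                 (\<forall>z\<in>Op. (f i has_derivative (\<lambda>h. inner (gradf i z) h)) (at z)) \<and>
                 continuous_on Op (gradf i)"
    and gradf_lip: "\<And>i u v. u \<in> Kset \<Longrightarrow> v \<in> Kset \<Longrightarrow>
                 norm (gradf i u - gradf i v) \<le> L i * norm (u - v)"
    and gradf_bdd: "\<And>i. bounded (gradf i ` Kset)"
    and r_convex: "\<And>l. convex_on UNIV (r l)"
    and r_subgrad: "\<And>l. bounded_subgradients_on (K l) (r l)"
    and U_coercive: "coercive_on Kset (\<lambda>z. (\<Sum>i\<in>UNIV. f i z) + (\<Sum>l\<in>UNIV. r l (z $ l)))"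
  (* network *)
    and E_loops: "\<And>i. (i, i) \<in> E"
    and E_strong: "\<And>i j. (i, j) \<in> E\<^sup>*"
  (* block selection *)
    and sel_ess_cyclic: "\<And>i. \<exists>T>0. \<forall>t. {sel (t + s) i | s. s < T} = UNIV"
  (* weights *)
    and kappa_pos: "\<kappa> > 0"
    and a_pos: "\<And>t l i j. (j, i) \<in> edges_blk E sel t l \<Longrightarrow> a t l i j > \<kappa>"
    and a_zero: "\<And>t l i j. (j, i) \<notin> edges_blk E sel t l \<Longrightarrow> a t l i j = 0"
    and a_colstoch: "\<And>t l j. (\<Sum>i\<in>UNIV. a t l i j) = 1"
  (* surrogates *)
    and tau_pos: "\<And>i. tau i > 0"
    and ftil_deriv: "\<And>i l w z. w \<in> Kset \<Longrightarrow> z \<in> K l \<Longrightarrow>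
                 ((\<lambda>v. ftil i l v w) has_derivative (\<lambda>h. inner (gftil i l z w) h)) (at z within K l)"
    and ftil_C1: "\<And>i l w. w \<in> Kset \<Longrightarrow> continuous_on (K l) (\<lambda>z. gftil i l z w)"
    and ftil_sc: "\<And>i l w. w \<in> Kset \<Longrightarrow> strongly_convex_with (K l) (tau i) (\<lambda>v. ftil i l v w)"
    and ftil_grad: "\<And>i l w. w \<in> Kset \<Longrightarrow> gftil i l (w $ l) w = gradf i w $ l"
    and ftil_lip: "\<And>i l. \<exists>C. \<forall>z\<in>K l. \<forall>u\<in>Kset. \<forall>v\<in>Kset.
                 norm (gftil i l z u - gftil i l z v) \<le> C * norm (u - v)"
  (* step sizes *)
    and gamma_pos: "\<And>t. 0 < gamma t"
    and gamma_le1: "\<And>t. gamma t \<le> 1"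
    and gamma_mono: "\<And>t. gamma (Suc t) \<le> gamma t"
    and gamma_nsum: "\<not> summable gamma"
    and gamma_sq: "summable (\<lambda>t. (gamma t)\<^sup>2)"
  (* algorithm: initialization *)
    and x0: "\<And>i. x 0 i \<in> Kset"
    and y0: "\<And>i. y 0 i = gradf i (x 0 i)"
    and phi0: "\<And>i l. phi 0 i l = 1"
  (* local minimization step *)
    and xtil_in: "\<And>t i. xtil t i \<in> K (sel t i)"
    and xtil_min: "\<And>t i z. z \<in> K (sel t i) \<Longrightarrow>
          ftil i (sel t i) (xtil t i) (x t i)
            + inner (real CARD('n) *\<^sub>R (y t i $ sel t i) - gradf i (x t i) $ sel t i)
                    (xtil t i - x t i $ sel t i)
            + r (sel t i) (xtil t i)
          \<le> ftil i (sel t i) z (x t i)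
            + inner (real CARD('n) *\<^sub>R (y t i $ sel t i) - gradf i (x t i) $ sel t i)
                    (z - x t i $ sel t i)
            + r (sel t i) z"
  (* consensus / tracking updates *)
    and phi_upd: "\<And>t i l. phi (Suc t) i l = (\<Sum>j\<in>nbr E sel t i l. a t l i j * phi t j l)"
    and x_upd: "\<And>t i l. x (Suc t) i $ l =
          (\<Sum>j\<in>nbr E sel t i l. (a t l i j * phi t j l / phi (Suc t) i l) *\<^sub>R
              (x t j $ l + gamma t *\<^sub>R
                 (if l = sel t j then xtil t j - x t j $ l else 0)))"
    and y_upd: "\<And>t i l. y (Suc t) i $ l =
          (\<Sum>j\<in>nbr E sel t i l. (a t l i j / phi (Suc t) i l) *\<^sub>R
              (phi t j l *\<^sub>R (y t j $ l) + gradf j (x (Suc t) j) $ l - gradf j (x t j) $ l))"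
  shows "\<forall>i. let sbar = (\<lambda>t. (1 / real CARD('n)) *\<^sub>R (\<chi> l. \<Sum>j\<in>UNIV. phi t j l *\<^sub>R (x t j $ l)))
             in ((\<lambda>t. norm (x t i - sbar t)) \<longlonglongrightarrow> 0)
              \<and> summable (\<lambda>t. gamma t * norm (x t i - sbar t))
              \<and> summable (\<lambda>t. (norm (x t i - sbar t))\<^sup>2)"
proof -
  define N where "N = real CARD('n)"
  have N0: "N > 0" and N1: "N \<ge> 1" by (simp_all add: N_def)
  have nbr_iff: "\<And>t i l j. j \<in> nbr E sel t i l \<longleftrightarrow> (j, i) \<in> edges_blk E sel t l"
    using E_loops by (auto simp: nbr_def edges_blk_def)
  have a_nn: "\<And>t l i j. 0 \<le> a t l i j"
  proof -
    fix t l i j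
    show "0 \<le> a t l i j"
    proof (cases "(j, i) \<in> edges_blk E sel t l")
      case True thus ?thesis using a_pos[OF True] kappa_pos by simp
    next
      case False thus ?thesis using a_zero[OF False] by simp
    qed
  qed
  have a_out: "\<And>t l i j. j \<notin> nbr E sel t i l \<Longrightarrow> a t l i j = 0"
    using a_zero nbr_iff by blast
  have a_diag: "\<And>t l i. a t l i i > \<kappa>"
  proof -
    fix t l i
    have "i \<in> nbr E sel t i l" by (simp add: nbr_def)
    hence "(i, i) \<in> edges_blk E sel t l" using nbr_iff by blast
    thus "a t l i i > \<kappa>" by (rule a_pos)
  qed
  have a_le1: "\<And>t l i j. a t l i j \<le> 1"
  proof -
    fix t l i j
    have "a t l i j \<le> (\<Sum>i'\<in>UNIV. a t l i' j)"
      by (rule member_le_sum) (auto intro: a_nn)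
    thus "a t l i j \<le> 1" using a_colstoch by simp
  qed
  have kappa1: "\<kappa> < 1" using a_diag a_le1 by (meson less_le_trans)
  have sumnbr: "(\<Sum>j\<in>nbr E sel t i l. F j) = (\<Sum>j\<in>UNIV. F j)"
    if "\<And>j. a t l i j = 0 \<Longrightarrow> F j = 0" for t i l and F :: "'n \<Rightarrow> 'v::comm_monoid_add"
    by (rule sum_nbr_univ) (use that a_out in blast)
  have "\<forall>k. \<exists>T>0. \<forall>t l. \<exists>u<T. sel (t + u) k = l"
  proof
    fix k
    obtain Tk where Tk: "Tk > 0" "\<And>t. {sel (t + s) k | s. s < Tk} = UNIV"
      using sel_ess_cyclic[of k] by blast
    have "\<forall>t l. \<exists>u<Tk. sel (t + u) k = l"
    proof (intro allI)
      fix t l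
      have "l \<in> {sel (t + s) k | s. s < Tk}" using Tk(2)[of t] by simp
      thus "\<exists>u<Tk. sel (t + u) k = l" by blast
    qed
    thus "\<exists>T>0. \<forall>t l. \<exists>u<T. sel (t + u) k = l" using Tk(1) by blast
  qed
  then obtain Tf where Tf: "\<And>k. Tf k > 0" "\<And>k t l. \<exists>u<Tf k. sel (t + u) k = l"
    by metis
  define T where "T = Max (range Tf)"
  have hop: "\<And>l k i t. (k, i) \<in> E \<Longrightarrow> \<exists>u<T. (k, i) \<in> edges_blk E sel (t + u) l"
  proof -
    fix l k i t assume ki: "(k, i) \<in> E"
    obtain u where u: "u < Tf k" "sel (t + u) k = l" using Tf(2) by blast
    have "Tf k \<le> T" unfolding T_def by simp
    hence "u < T" using u by simp
    moreover have "(k, i) \<in> edges_blk E sel (t + u) l"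
      using ki u by (auto simp: edges_blk_def nbr_def)
    ultimately show "\<exists>u<T. (k, i) \<in> edges_blk E sel (t + u) l" by blast
  qed
  have phi_rec: "\<And>t i l. phi (Suc t) i l = (\<Sum>j\<in>UNIV. a t l i j * phi t j l)"
  proof -
    fix t i l
    have "(\<Sum>j\<in>nbr E sel t i l. a t l i j * phi t j l) = (\<Sum>j\<in>UNIV. a t l i j * phi t j l)"
      by (rule sumnbr) simp
    thus "phi (Suc t) i l = (\<Sum>j\<in>UNIV. a t l i j * phi t j l)" using phi_upd by simp
  qed
  have phi_pos: "\<And>i. phi t i l > 0" for t l
  proof (induction t)
    case 0 thus ?case by (simp add: phi0)
  next
    case (Suc t)
    fix i
    have "a t l i i * phi t i l \<le> (\<Sum>j\<in>UNIV. a t l i j * phi t j l)"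
      by (rule member_le_sum) (auto intro!: mult_nonneg_nonneg a_nn intro: less_imp_le Suc)
    moreover have "a t l i i * phi t i l > 0" using a_diag[of t l i] kappa_pos Suc by simp
    ultimately show "phi (Suc t) i l > 0" using phi_rec by simp
  qed
  have phi_sum: "(\<Sum>i\<in>UNIV. phi t i l) = N" for t l
  proof (induction t)
    case 0 thus ?case by (simp add: phi0 N_def)
  next
    case (Suc t)
    have "(\<Sum>i\<in>UNIV. phi (Suc t) i l) = (\<Sum>i\<in>UNIV. \<Sum>j\<in>UNIV. a t l i j * phi t j l)"
      using phi_rec by simp
    also have "\<dots> = (\<Sum>j\<in>UNIV. \<Sum>i\<in>UNIV. a t l i j * phi t j l)" by (rule sum.swap)
    also have "\<dots> = (\<Sum>j\<in>UNIV. phi t j l)"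
      using a_colstoch by (simp add: sum_distrib_right[symmetric])
    finally show ?case using Suc by simp
  qed
  have phi_le: "phi t i l \<le> N" for t i l
  proof -
    have "phi t i l \<le> (\<Sum>i\<in>UNIV. phi t i l)"
      by (rule member_le_sum) (auto intro: less_imp_le phi_pos)
    thus ?thesis using phi_sum by simp
  qed
  have phi_kt: "phi t i l \<ge> \<kappa> ^ t" for t i l
  proof (induction t arbitrary: i)
    case 0 thus ?case by (simp add: phi0)
  next
    case (Suc t)
    have "a t l i i * phi t i l \<le> (\<Sum>j\<in>UNIV. a t l i j * phi t j l)"
      by (rule member_le_sum) (auto intro!: mult_nonneg_nonneg a_nn intro: less_imp_le phi_pos)
    moreover have "\<kappa> * \<kappa> ^ t \<le> a t l i i * phi t i l"
      using a_diag[of t l i] kappa_pos Suc[of i] by (intro mult_mono) auto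
    ultimately show ?case using phi_rec by simp
  qed
  have "\<forall>l. \<exists>\<delta>>0. \<forall>t i. phi t i l \<ge> \<delta>"
  proof
    fix l
    define P where "P t = a t l" for t
    have Pnn: "\<And>t i j. P t i j \<ge> 0" using a_nn by (simp add: P_def)
    have actd: "\<And>t i. (i, i) \<in> edges_blk E sel t l" using E_loops by (simp add: edges_blk_def nbr_def)
    have actP: "\<And>t i j. (j, i) \<in> edges_blk E sel t l \<Longrightarrow> P t i j \<ge> \<kappa>"
      using a_pos by (simp add: P_def less_imp_le)
    obtain W where W: "W > 0" "\<And>s i j. Mp P s (s + W) i j \<ge> \<kappa> ^ W"
      using window_pos[of P \<kappa> "\<lambda>t i j. (j, i) \<in> edges_blk E sel t l" E T, OF Pnn kappa_pos actd actP hop[of _ _ _ l] E_strong]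
      by blast
    have zrec: "\<And>t. (\<lambda>i. phi (Suc t) i l) = mv (P t) (\<lambda>i. phi t i l)"
      by (rule ext) (simp add: mv_def P_def phi_rec)
    have "phi t i l \<ge> \<kappa> ^ W" for t i
    proof (cases "W \<le> t")
      case True
      define s where "s = t - W"
      have ts: "t = s + W" using True by (simp add: s_def)
      have "(\<lambda>i. phi t i l) = mv (Mp P s t) (\<lambda>i. phi s i l)"
        by (rule lin_rec[where z="\<lambda>t i. phi t i l", OF zrec]) (simp add: ts)
      hence "phi t i l = (\<Sum>j\<in>UNIV. Mp P s t i j * phi s j l)"
        by (metis mv_def)
      also have "\<dots> \<ge> (\<Sum>j\<in>UNIV. \<kappa> ^ W * phi s j l)"
        using W(2)[of s i] phi_pos ts by (intro sum_mono mult_right_mono) (auto intro: less_imp_le)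
      finally have "phi t i l \<ge> \<kappa> ^ W * N"
        using phi_sum[of s l] by (simp add: sum_distrib_left[symmetric])
      moreover have "\<kappa> ^ W * N \<ge> \<kappa> ^ W" using N1 kappa_pos by simp
      ultimately show ?thesis by linarith
    next
      case False
      have "\<kappa> ^ W \<le> \<kappa> ^ t" using False kappa_pos kappa1
        by (intro power_decreasing) auto
      thus ?thesis using phi_kt[of t i l] by linarith
    qed
    thus "\<exists>\<delta>>0. \<forall>t i. phi t i l \<ge> \<delta>" using kappa_pos by (intro exI[of _ "\<kappa> ^ W"]) auto
  qed
  then obtain \<delta> where dpos: "\<And>l. \<delta> l > 0" and phi_low: "\<And>t i l. phi t i l \<ge> \<delta> l"
    by metis
  have Kset_def': "Kset = blockset K" by (simp add: Kset_def)
  have w_nn: "0 \<le> a t l i j * phi t j l / phi (Suc t) i l" for t l i j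
    by (rule divide_nonneg_pos[OF mult_nonneg_nonneg[OF a_nn less_imp_le[OF phi_pos]] phi_pos])
  have xK: "\<forall>i l. x t i $ l \<in> K l" for t
  proof (induction t)
    case 0 thus ?case using x0 by (simp add: Kset_def' blockset_def)
  next
    case (Suc t)
    show ?case
    proof (intro allI)
      fix i l
      define w where "w j = a t l i j * phi t j l / phi (Suc t) i l" for j
      define v where "v j = x t j $ l + gamma t *\<^sub>R (if l = sel t j then xtil t j - x t j $ l else 0)" for j
      have "x (Suc t) i $ l = (\<Sum>j\<in>nbr E sel t i l. w j *\<^sub>R v j)"
        using x_upd by (simp add: w_def v_def)
      moreover have "(\<Sum>j\<in>nbr E sel t i l. w j *\<^sub>R v j) \<in> K l"
      proof (rule convex_sum[OF _ K_convex])
        show "finite (nbr E sel t i l)" by simp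
        have "(\<Sum>j\<in>nbr E sel t i l. w j) = (\<Sum>j\<in>nbr E sel t i l. a t l i j * phi t j l) / phi (Suc t) i l"
          by (simp add: w_def sum_divide_distrib)
        also have "\<dots> = 1" using phi_upd[of t i l] phi_pos[of "Suc t" i l] by simp
        finally show "(\<Sum>j\<in>nbr E sel t i l. w j) = 1" .
        show "\<And>j. j \<in> nbr E sel t i l \<Longrightarrow> 0 \<le> w j"
          using w_nn by (simp add: w_def)
        show "\<And>j. j \<in> nbr E sel t i l \<Longrightarrow> v j \<in> K l"
        proof -
          fix j
          show "v j \<in> K l"
          proof (cases "l = sel t j")
            case True
            have "v j = (1 - gamma t) *\<^sub>R x t j $ l + gamma t *\<^sub>R xtil t j"
              using True by (simp add: v_def algebra_simps)
            also have "\<dots> \<in> K l"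
              using Suc xtil_in[of t j] True gamma_pos[of t] gamma_le1[of t] K_convex[of l]
              by (intro convexD) auto
            finally show ?thesis .
          next
            case False thus ?thesis using Suc by (simp add: v_def)
          qed
        qed
      qed
      ultimately show "x (Suc t) i $ l \<in> K l" by simp
    qed
  qed
  have xKs: "\<And>t i. x t i \<in> Kset" using xK by (simp add: Kset_def' blockset_def)
  have "bounded (\<Union>i\<in>UNIV. gradf i ` Kset)" using gradf_bdd by auto
  then obtain G where G: "\<And>i v. v \<in> Kset \<Longrightarrow> norm (gradf i v) \<le> G"
    unfolding bounded_iff by blast
  have Gc: "\<bar>gradf i v $ l $ k\<bar> \<le> G" if "v \<in> Kset" for i v l k
  proof -
    have "\<bar>gradf i v $ l $ k\<bar> \<le> norm (gradf i v $ l)" by (rule component_le_norm_cart)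
    also have "\<dots> \<le> norm (gradf i v)" unfolding norm_vec_def by (rule member_le_L2_set) simp_all
    finally show ?thesis using G[OF that, of i] by linarith
  qed
  have G0: "G \<ge> 0" using G[OF xKs[of 0 undefined], of undefined] by (meson norm_ge_zero order_trans)
  define Bm where "Bm l t i j = a t l i j * phi t j l / phi (Suc t) i l" for l t i j
  have Bm_nn: "\<And>l t i j. Bm l t i j \<ge> 0"
    using w_nn by (simp add: Bm_def)
  have Bm_rs: "\<And>l t. rs (Bm l t)"
  proof -
    fix l t
    have "(\<Sum>j\<in>UNIV. Bm l t i j) = 1" for i
    proof -
      have "(\<Sum>j\<in>UNIV. Bm l t i j) = (\<Sum>j\<in>UNIV. a t l i j * phi t j l) / phi (Suc t) i l"
        by (simp add: Bm_def sum_divide_distrib)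
      thus ?thesis using phi_rec[of t i l] phi_pos[of "Suc t" i l] by simp
    qed
    thus "rs (Bm l t)" using Bm_nn by (simp add: rs_def)
  qed
  have Bm_win: "\<exists>W>0. \<exists>\<eta>>0. \<forall>s i j. Mp (Bm l) s (s + W) i j \<ge> \<eta>" for l
  proof -
    define c where "c = \<kappa> * \<delta> l / N"
    have c0: "c > 0" using kappa_pos dpos[of l] N0 by (simp add: c_def)
    have nn: "\<And>t i j. Bm l t i j \<ge> 0" by (rule Bm_nn)
    have actd: "\<And>t i. (i, i) \<in> edges_blk E sel t l" using E_loops by (simp add: edges_blk_def nbr_def)
    have actP: "Bm l t i j \<ge> c" if "(j, i) \<in> edges_blk E sel t l" for t i j
    proof -
      have pl: "\<delta> l \<le> phi t j l" by (rule phi_low)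
      have "\<kappa> * \<delta> l \<le> a t l i j * phi t j l"
        using a_pos[OF that] pl kappa_pos dpos by (intro mult_mono) (auto intro: less_imp_le)
      moreover have "0 < phi (Suc t) i l" "phi (Suc t) i l \<le> N" using phi_pos phi_le by auto
      moreover have "0 \<le> a t l i j * phi t j l"
        by (rule mult_nonneg_nonneg[OF a_nn less_imp_le[OF phi_pos]])
      ultimately have "\<kappa> * \<delta> l / N \<le> a t l i j * phi t j l / phi (Suc t) i l"
        by (intro frac_le) auto
      thus ?thesis by (simp add: Bm_def c_def)
    qed
    obtain W where W: "W > 0" "\<And>s i j. Mp (Bm l) s (s + W) i j \<ge> c ^ W"
      using window_pos[of "Bm l" c "\<lambda>t i j. (j, i) \<in> edges_blk E sel t l" E T, OF nn c0 actd actP hop[of _ _ _ l] E_strong]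
      by blast
    thus ?thesis using c0 by (intro exI[of _ W] conjI exI[of _ "c ^ W"]) auto
  qed
  have y_rec0: "y (Suc t) i $ l $ k = (\<Sum>j\<in>UNIV. (a t l i j / phi (Suc t) i l) *
      (phi t j l * y t j $ l $ k + gradf j (x (Suc t) j) $ l $ k - gradf j (x t j) $ l $ k))" for t i l k
  proof -
    have "y (Suc t) i $ l $ k = (\<Sum>j\<in>nbr E sel t i l. (a t l i j / phi (Suc t) i l) *
      (phi t j l * y t j $ l $ k + gradf j (x (Suc t) j) $ l $ k - gradf j (x t j) $ l $ k))"
      using y_upd[of t i l] by simp
    also have "\<dots> = (\<Sum>j\<in>UNIV. (a t l i j / phi (Suc t) i l) *
      (phi t j l * y t j $ l $ k + gradf j (x (Suc t) j) $ l $ k - gradf j (x t j) $ l $ k))"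
      by (rule sumnbr) simp
    finally show ?thesis .
  qed
  define ey where "ey l k t j = (gradf j (x (Suc t) j) $ l $ k - gradf j (x t j) $ l $ k) / phi t j l" for l k t j
  have y_rec: "(\<lambda>i. y (Suc t) i $ l $ k) = mv (Bm l t) (\<lambda>j. y t j $ l $ k + ey l k t j)" for t l k
  proof (rule ext)
    fix i
    show "y (Suc t) i $ l $ k = mv (Bm l t) (\<lambda>j. y t j $ l $ k + ey l k t j) i"
      unfolding y_rec0 mv_def
    proof (intro sum.cong refl)
      fix j
      have "phi t j l > 0" "phi (Suc t) i l > 0" by (rule phi_pos)+
      thus "(a t l i j / phi (Suc t) i l) *
          (phi t j l * y t j $ l $ k + gradf j (x (Suc t) j) $ l $ k - gradf j (x t j) $ l $ k)
        = Bm l t i j * (y t j $ l $ k + ey l k t j)"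
        by (simp add: Bm_def ey_def field_simps)
    qed
  qed
  have y_mean: "(\<Sum>j\<in>UNIV. phi t j l * y t j $ l $ k) = (\<Sum>j\<in>UNIV. gradf j (x t j) $ l $ k)" for t l k
  proof (induction t)
    case 0 thus ?case by (simp add: phi0 y0)
  next
    case (Suc t)
    define X where "X j = phi t j l * y t j $ l $ k + gradf j (x (Suc t) j) $ l $ k - gradf j (x t j) $ l $ k" for j
    have "phi (Suc t) i l * y (Suc t) i $ l $ k = (\<Sum>j\<in>UNIV. a t l i j * X j)" for i
    proof -
      have pp: "phi (Suc t) i l > 0" by (rule phi_pos)
      have "phi (Suc t) i l * y (Suc t) i $ l $ k = (\<Sum>j\<in>UNIV. phi (Suc t) i l * ((a t l i j / phi (Suc t) i l) * X j))"
        unfolding y_rec0 X_def by (simp add: sum_distrib_left)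
      also have "\<dots> = (\<Sum>j\<in>UNIV. a t l i j * X j)"
        using pp by (intro sum.cong refl) simp
      finally show ?thesis .
    qed
    hence "(\<Sum>i\<in>UNIV. phi (Suc t) i l * y (Suc t) i $ l $ k) = (\<Sum>i\<in>UNIV. \<Sum>j\<in>UNIV. a t l i j * X j)"
      by simp
    also have "\<dots> = (\<Sum>j\<in>UNIV. \<Sum>i\<in>UNIV. a t l i j * X j)" by (rule sum.swap)
    also have "\<dots> = (\<Sum>j\<in>UNIV. X j)" using a_colstoch by (simp add: sum_distrib_right[symmetric])
    also have "\<dots> = (\<Sum>j\<in>UNIV. gradf j (x (Suc t) j) $ l $ k)"
      using Suc by (simp add: X_def sum.distrib sum_subtractf)
    finally show ?case .
  qed
  have "\<forall>l k. \<exists>Yb. \<forall>t i. \<bar>y t i $ l $ k\<bar> \<le> Yb"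
  proof (intro allI)
    fix l k
    have eyb: "\<bar>ey l k t j\<bar> \<le> 2 * G / \<delta> l" for t j
    proof -
      have g1: "\<bar>gradf j (x (Suc t) j) $ l $ k\<bar> \<le> G" by (rule Gc[OF xKs])
      have g2: "\<bar>gradf j (x t j) $ l $ k\<bar> \<le> G" by (rule Gc[OF xKs])
      have d: "\<bar>gradf j (x (Suc t) j) $ l $ k - gradf j (x t j) $ l $ k\<bar> \<le> 2 * G"
        using abs_triangle_ineq4[of "gradf j (x (Suc t) j) $ l $ k" "gradf j (x t j) $ l $ k"] g1 g2
        by linarith
      have pp: "phi t j l > 0" by (rule phi_pos)
      have p: "phi t j l \<ge> \<delta> l" by (rule phi_low)
      have "\<bar>ey l k t j\<bar> = \<bar>gradf j (x (Suc t) j) $ l $ k - gradf j (x t j) $ l $ k\<bar> / phi t j l"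
        unfolding ey_def abs_divide using pp by simp
      also have "\<dots> \<le> 2 * G / phi t j l"
        by (rule divide_right_mono[OF d less_imp_le[OF pp]])
      also have "\<dots> \<le> 2 * G / \<delta> l"
        by (rule divide_left_mono[OF p]) (use G0 dpos[of l] pp in simp_all)
      finally show ?thesis .
    qed
    obtain W \<eta> where W: "W > 0" "\<eta> > 0" "\<And>s i j. Mp (Bm l) s (s + W) i j \<ge> \<eta>"
      using Bm_win[of l] by blast
    obtain C lam where Cl: "0 < lam" "lam < 1" "0 \<le> C"
      "\<And>t. sp (\<lambda>j. y t j $ l $ k) \<le> C * lam ^ t + C * (\<Sum>u<t. lam ^ (t - u) * (2 * G / \<delta> l))"
      using consensus[where P="Bm l" and W=W and \<eta>=\<eta> and z="\<lambda>t j. y t j $ l $ k" and e="ey l k" and Eb="\<lambda>_. 2 * G / \<delta> l",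
          OF Bm_rs W(1) W(3) W(2) y_rec eyb] by blast
    define Yb where "Yb = C + C * ((1 / (1 - lam)) * (2 * G / \<delta> l)) + G"
    have "\<bar>y t i $ l $ k\<bar> \<le> Yb" for t i
    proof -
      have c0: "0 \<le> 2 * G / \<delta> l" using G0 dpos[of l] by simp
      have "(\<Sum>u<t. lam ^ (t - u) * (2 * G / \<delta> l)) = (\<Sum>u<t. lam ^ (t - u)) * (2 * G / \<delta> l)"
        by (simp only: sum_distrib_right)
      also have "\<dots> \<le> (1 / (1 - lam)) * (2 * G / \<delta> l)"
        using geo_bound[of lam t] Cl c0 by (intro mult_right_mono) auto
      finally have s1: "(\<Sum>u<t. lam ^ (t - u) * (2 * G / \<delta> l)) \<le> (1 / (1 - lam)) * (2 * G / \<delta> l)" .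
      have "lam ^ t \<le> 1" using Cl by (simp add: power_le_one)
      hence "C * lam ^ t \<le> C" using mult_left_mono[of "lam ^ t" 1 C] Cl(3) by simp
      moreover have "C * (\<Sum>u<t. lam ^ (t - u) * (2 * G / \<delta> l)) \<le> C * ((1 / (1 - lam)) * (2 * G / \<delta> l))"
        using s1 Cl by (intro mult_left_mono) auto
      ultimately have spb: "sp (\<lambda>j. y t j $ l $ k) \<le> C + C * ((1 / (1 - lam)) * (2 * G / \<delta> l))"
        using Cl(4)[of t] by linarith
      have dev: "\<bar>y t i $ l $ k - (1 / N) * (\<Sum>j\<in>UNIV. phi t j l * y t j $ l $ k)\<bar> \<le> sp (\<lambda>j. y t j $ l $ k)"
        unfolding N_def
        by (rule avg_dev[of "\<lambda>j. phi t j l" "\<lambda>j. y t j $ l $ k" i]) (use phi_pos phi_sum in \<open>auto intro: less_imp_le simp: N_def\<close>)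
      have "\<bar>\<Sum>j\<in>UNIV. gradf j (x t j) $ l $ k\<bar> \<le> (\<Sum>j\<in>UNIV. \<bar>gradf j (x t j) $ l $ k\<bar>)"
        by (rule sum_abs)
      also have "\<dots> \<le> (\<Sum>j\<in>(UNIV::'n set). G)"
        by (rule sum_mono) (rule Gc[OF xKs])
      also have "\<dots> = N * G" by (simp add: N_def)
      finally have "\<bar>\<Sum>j\<in>UNIV. gradf j (x t j) $ l $ k\<bar> \<le> N * G" .
      hence "\<bar>(1 / N) * (\<Sum>j\<in>UNIV. phi t j l * y t j $ l $ k)\<bar> \<le> G"
        using N0 y_mean[of t l k] by (simp add: abs_mult divide_le_eq mult.commute)
      thus ?thesis using dev spb unfolding Yb_def by linarith
    qed
    thus "\<exists>Yb. \<forall>t i. \<bar>y t i $ l $ k\<bar> \<le> Yb" by blast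
  qed
  define Ybf where "Ybf l k = (SOME Yb. \<forall>t i. \<bar>y t i $ l $ k\<bar> \<le> Yb)" for l k
  have Ybf: "\<And>t i l k. \<bar>y t i $ l $ k\<bar> \<le> Ybf l k"
  proof -
    fix t i l k
    have "\<forall>t i. \<bar>y t i $ l $ k\<bar> \<le> Ybf l k"
      unfolding Ybf_def by (rule someI_ex) (use \<open>\<forall>l k. \<exists>Yb. \<forall>t i. \<bar>y t i $ l $ k\<bar> \<le> Yb\<close> in blast)
    thus "\<bar>y t i $ l $ k\<bar> \<le> Ybf l k" by blast
  qed
  define Yn where "Yn l = (\<Sum>k\<in>UNIV. Ybf l k)" for l
  have Yn: "norm (y t i $ l) \<le> Yn l" for t i l
    unfolding Yn_def by (rule order_trans[OF norm_le_l1_cart sum_mono[OF Ybf]])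
  have Yn0: "0 \<le> Yn l" for l using Yn[of 0 undefined l] by (meson norm_ge_zero order_trans)
  define Crf where "Crf l = (SOME C. \<forall>z\<in>K l. \<forall>g. (\<forall>w. r l w \<ge> r l z + inner g (w - z)) \<longrightarrow> norm g \<le> C)" for l
  have Crf: "\<And>l z g. z \<in> K l \<Longrightarrow> (\<forall>w. r l w \<ge> r l z + inner g (w - z)) \<Longrightarrow> norm g \<le> Crf l"
  proof -
    fix l z g assume zK: "z \<in> K l" and sg: "\<forall>w. r l w \<ge> r l z + inner g (w - z)"
    have ex: "\<exists>C. \<forall>z\<in>K l. \<forall>g. (\<forall>w. r l w \<ge> r l z + inner g (w - z)) \<longrightarrow> norm g \<le> C"
      using r_subgrad[of l] by (simp add: bounded_subgradients_on_def)
    have "\<forall>z\<in>K l. \<forall>g. (\<forall>w. r l w \<ge> r l z + inner g (w - z)) \<longrightarrow> norm g \<le> Crf l"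
      unfolding Crf_def by (rule someI_ex[OF ex])
    thus "norm g \<le> Crf l" using zK sg by blast
  qed
  define Dx where "Dx = (\<Sum>i\<in>UNIV. \<Sum>l\<in>UNIV. 4 * (N * Yn l + \<bar>Crf l\<bar>) / tau i)"
  have Dx: "norm (xtil t i - x t i $ sel t i) \<le> Dx" for t i
  proof -
    define l where "l = sel t i"
    have wK: "x t i \<in> Kset" by (rule xKs)
    have pK: "x t i $ l \<in> K l" using xK by blast
    have der: "((\<lambda>v. ftil i l v (x t i)) has_derivative (\<lambda>h. inner (gradf i (x t i) $ l) h)) (at (x t i $ l) within K l)"
      using ftil_deriv[OF wK pK] ftil_grad[OF wK] by simp
    have pb: "norm (xtil t i - x t i $ l) \<le> 4 * (norm (gradf i (x t i) $ l + (N *\<^sub>R (y t i $ l) - gradf i (x t i) $ l)) + Crf l) / tau i"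
    proof (rule prox_bound[OF ftil_sc[OF wK] tau_pos pK _ der r_convex])
      show "xtil t i \<in> K l" using xtil_in by (simp add: l_def)
      show "\<And>s. \<forall>w. r l (x t i $ l) + inner s (w - x t i $ l) \<le> r l w \<Longrightarrow> norm s \<le> Crf l"
        using Crf[OF pK] by blast
      show "\<exists>s. \<forall>w. r l (x t i $ l) + inner s (w - x t i $ l) \<le> r l w"
        using subgradient_exists[OF r_convex] by blast
      show "\<And>z. z \<in> K l \<Longrightarrow> ftil i l (xtil t i) (x t i) + inner (N *\<^sub>R (y t i $ l) - gradf i (x t i) $ l) (xtil t i - x t i $ l) + r l (xtil t i)
              \<le> ftil i l z (x t i) + inner (N *\<^sub>R (y t i $ l) - gradf i (x t i) $ l) (z - x t i $ l) + r l z"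
        using xtil_min unfolding l_def N_def by blast
    qed
    have "norm (gradf i (x t i) $ l + (N *\<^sub>R (y t i $ l) - gradf i (x t i) $ l)) = N * norm (y t i $ l)"
      using N0 by simp
    also have "\<dots> \<le> N * Yn l" using Yn N0 by (intro mult_left_mono) auto
    finally have nb: "norm (gradf i (x t i) $ l + (N *\<^sub>R (y t i $ l) - gradf i (x t i) $ l)) \<le> N * Yn l" .
    have "4 * (norm (gradf i (x t i) $ l + (N *\<^sub>R (y t i $ l) - gradf i (x t i) $ l)) + Crf l) / tau i
          \<le> 4 * (N * Yn l + \<bar>Crf l\<bar>) / tau i"
      using nb tau_pos[of i] abs_ge_self[of "Crf l"] by (intro divide_right_mono mult_left_mono add_mono) auto
    hence "norm (xtil t i - x t i $ l) \<le> 4 * (N * Yn l + \<bar>Crf l\<bar>) / tau i"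
      using pb by linarith
    also have "\<dots> \<le> (\<Sum>l\<in>UNIV. 4 * (N * Yn l + \<bar>Crf l\<bar>) / tau i)"
      by (rule member_le_sum) (use Yn0 N0 tau_pos in \<open>auto intro!: divide_nonneg_pos\<close>)
    also have "\<dots> \<le> Dx" unfolding Dx_def
      by (rule member_le_sum[where f="\<lambda>i. \<Sum>l\<in>UNIV. 4 * (N * Yn l + \<bar>Crf l\<bar>) / tau i"])
        (use Yn0 N0 tau_pos in \<open>auto intro!: sum_nonneg divide_nonneg_pos\<close>)
    finally show ?thesis by (simp add: l_def)
  qed
  have Dx0: "0 \<le> Dx" using Dx[of 0 undefined] by (meson norm_ge_zero order_trans)
  define ex where "ex l k t j = gamma t * (if l = sel t j then (xtil t j - x t j $ l) $ k else 0)" for l k t j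
  have x_rec: "(\<lambda>i. x (Suc t) i $ l $ k) = mv (Bm l t) (\<lambda>j. x t j $ l $ k + ex l k t j)" for t l k
  proof (rule ext)
    fix i
    have "x (Suc t) i $ l $ k = (\<Sum>j\<in>nbr E sel t i l. (a t l i j * phi t j l / phi (Suc t) i l) *
          (x t j $ l $ k + ex l k t j))"
      unfolding x_upd sum_component
    proof (intro sum.cong refl)
      fix j
      show "(((a t l i j * phi t j l / phi (Suc t) i l) *\<^sub>R
              (x t j $ l + gamma t *\<^sub>R (if l = sel t j then xtil t j - x t j $ l else 0))) $ k) =
            (a t l i j * phi t j l / phi (Suc t) i l) * (x t j $ l $ k + ex l k t j)"
        by (cases "l = sel t j") (simp_all add: ex_def)
    qed
    also have "\<dots> = (\<Sum>j\<in>UNIV. (a t l i j * phi t j l / phi (Suc t) i l) * (x t j $ l $ k + ex l k t j))"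
      by (rule sumnbr) simp
    also have "\<dots> = mv (Bm l t) (\<lambda>j. x t j $ l $ k + ex l k t j) i"
      by (simp add: mv_def Bm_def)
    finally show "x (Suc t) i $ l $ k = mv (Bm l t) (\<lambda>j. x t j $ l $ k + ex l k t j) i" .
  qed
  have exb: "\<bar>ex l k t j\<bar> \<le> gamma t * Dx" for l k t j
  proof (cases "l = sel t j")
    case True
    have "\<bar>(xtil t j - x t j $ l) $ k\<bar> \<le> norm (xtil t j - x t j $ l)" by (rule component_le_norm_cart)
    also have "\<dots> \<le> Dx" using Dx[of t j] True by simp
    finally have "\<bar>(xtil t j - x t j $ l) $ k\<bar> \<le> Dx" .
    thus ?thesis using True gamma_pos[of t] by (simp add: ex_def abs_mult mult_left_mono)
  next
    case False thus ?thesis using gamma_pos[of t] Dx0 by (simp add: ex_def)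
  qed
  define Q where "Q p C lam \<longleftrightarrow> 0 < lam \<and> lam < 1 \<and> 0 \<le> C \<and>
      (\<forall>t. sp (\<lambda>j. x t j $ fst p $ snd p) \<le> C * lam ^ t + C * (\<Sum>u<t. lam ^ (t - u) * (gamma u * Dx)))"
    for p :: "'b \<times> 'd" and C lam :: real
  have Qex: "\<exists>q. Q p (fst q) (snd q)" for p
  proof -
    obtain l k where p: "p = (l, k)" by (cases p)
    obtain W \<eta> where W: "W > 0" "\<eta> > 0" "\<And>s i j. Mp (Bm l) s (s + W) i j \<ge> \<eta>"
      using Bm_win[of l] by blast
    obtain C lam where "0 < lam" "lam < 1" "0 \<le> C"
      "\<And>t. sp (\<lambda>j. x t j $ l $ k) \<le> C * lam ^ t + C * (\<Sum>u<t. lam ^ (t - u) * (gamma u * Dx))"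
      using consensus[where P="Bm l" and W=W and \<eta>=\<eta> and z="\<lambda>t j. x t j $ l $ k" and e="ex l k" and Eb="\<lambda>u. gamma u * Dx",
          OF Bm_rs W(1) W(3) W(2) x_rec exb] by blast
    hence "Q p C lam" by (simp add: Q_def p)
    thus ?thesis by (intro exI[of _ "(C, lam)"]) simp
  qed
  define Fq where "Fq p = (SOME q. Q p (fst q) (snd q))" for p
  define Cf where "Cf p = fst (Fq p)" for p
  define Lf where "Lf p = snd (Fq p)" for p
  have QF: "Q p (Cf p) (Lf p)" for p
    unfolding Cf_def Lf_def Fq_def by (rule someI_ex[OF Qex])
  define lam where "lam = Max (range Lf)"
  have "lam \<in> range Lf" unfolding lam_def by (rule Max_in) auto
  then obtain p0 where p0: "lam = Lf p0" by blast
  have lam1: "lam < 1" and lam0: "0 < lam" using QF[of p0] p0 by (auto simp: Q_def)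
  have Lle: "Lf p \<le> lam" for p unfolding lam_def by simp
  have Lf0: "0 < Lf p" for p using QF[of p] by (simp add: Q_def)
  define C where "C = (\<Sum>p\<in>UNIV. Cf p)"
  have Cf0: "0 \<le> Cf p" for p using QF[of p] by (simp add: Q_def)
  have Cle: "Cf p \<le> C" for p unfolding C_def by (rule member_le_sum) (auto intro: Cf0)
  have C0: "0 \<le> C" unfolding C_def by (intro sum_nonneg) (auto intro: Cf0)
  define A where "A t = lam ^ t + (\<Sum>u<t. lam ^ (t - u) * gamma u)" for t
  have spb: "sp (\<lambda>j. x t j $ l $ k) \<le> C * (1 + Dx) * A t" for t l k
  proof -
    have q: "sp (\<lambda>j. x t j $ l $ k) \<le> Cf (l, k) * Lf (l, k) ^ t + Cf (l, k) * (\<Sum>u<t. Lf (l, k) ^ (t - u) * (gamma u * Dx))"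
      using QF[of "(l, k)"] by (simp add: Q_def)
    have "Cf (l, k) * Lf (l, k) ^ t \<le> C * lam ^ t"
      using Cle Cf0 Lle Lf0 by (intro mult_mono power_mono) (auto intro: less_imp_le C0)
    moreover have "Cf (l, k) * (\<Sum>u<t. Lf (l, k) ^ (t - u) * (gamma u * Dx)) \<le> C * (\<Sum>u<t. lam ^ (t - u) * (gamma u * Dx))"
    proof -
      have sm: "(\<Sum>u<t. Lf (l, k) ^ (t - u) * (gamma u * Dx)) \<le> (\<Sum>u<t. lam ^ (t - u) * (gamma u * Dx))"
      proof (rule sum_mono)
        fix u
        have "Lf (l, k) ^ (t - u) \<le> lam ^ (t - u)"
          using Lle Lf0 by (intro power_mono) (auto intro: less_imp_le)
        moreover have "0 \<le> gamma u * Dx" using gamma_pos[of u] Dx0 by simp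
        ultimately show "Lf (l, k) ^ (t - u) * (gamma u * Dx) \<le> lam ^ (t - u) * (gamma u * Dx)"
          by (rule mult_right_mono)
      qed
      have s0: "0 \<le> (\<Sum>u<t. Lf (l, k) ^ (t - u) * (gamma u * Dx))"
        using Lf0 gamma_pos Dx0 by (intro sum_nonneg mult_nonneg_nonneg) (auto intro: less_imp_le)
      show ?thesis by (rule mult_mono[OF Cle sm C0 s0])
    qed
    moreover have "C * lam ^ t + C * (\<Sum>u<t. lam ^ (t - u) * (gamma u * Dx)) \<le> C * (1 + Dx) * A t"
    proof -
      have S0: "0 \<le> (\<Sum>u<t. lam ^ (t - u) * gamma u)"
        using lam0 gamma_pos by (intro sum_nonneg mult_nonneg_nonneg) (auto intro: less_imp_le)
      have "(\<Sum>u<t. lam ^ (t - u) * (gamma u * Dx)) = Dx * (\<Sum>u<t. lam ^ (t - u) * gamma u)"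
        by (simp add: sum_distrib_left mult_ac)
      moreover have "C * lam ^ t \<le> C * (1 + Dx) * lam ^ t"
      proof -
        have "C * 1 \<le> C * (1 + Dx)" using C0 Dx0 by (intro mult_left_mono) auto
        hence "C * 1 * lam ^ t \<le> C * (1 + Dx) * lam ^ t" by (rule mult_right_mono) (use lam0 in simp)
        thus ?thesis by simp
      qed
      moreover have "C * (Dx * (\<Sum>u<t. lam ^ (t - u) * gamma u)) \<le> C * (1 + Dx) * (\<Sum>u<t. lam ^ (t - u) * gamma u)"
      proof -
        have "C * Dx \<le> C * (1 + Dx)" using C0 Dx0 by (intro mult_left_mono) auto
        hence "C * Dx * (\<Sum>u<t. lam ^ (t - u) * gamma u) \<le> C * (1 + Dx) * (\<Sum>u<t. lam ^ (t - u) * gamma u)"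
          by (rule mult_right_mono) (rule S0)
        thus ?thesis by (simp add: mult.assoc)
      qed
      ultimately show ?thesis by (simp add: A_def distrib_left)
    qed
    ultimately show ?thesis using q by linarith
  qed
  show ?thesis
  proof (intro allI)
    fix i
    define err where "err t = norm (x t i - (1 / real CARD('n)) *\<^sub>R (\<chi> l. \<Sum>j\<in>UNIV. phi t j l *\<^sub>R (x t j $ l)))" for t
    define K where "K = real CARD('b) * real CARD('d) * (C * (1 + Dx))"
    have K0: "0 \<le> K" using C0 Dx0 by (simp add: K_def)
    have eb: "err t \<le> K * (lam ^ t + (\<Sum>u<t. lam ^ (t - u) * gamma u))" for t
    proof -
      have "err t \<le> (\<Sum>l\<in>UNIV. \<Sum>k\<in>UNIV. \<bar>(x t i - (1 / real CARD('n)) *\<^sub>R (\<chi> l. \<Sum>j\<in>UNIV. phi t j l *\<^sub>R (x t j $ l))) $ l $ k\<bar>)"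
        unfolding err_def by (rule norm_cart2)
      also have "\<dots> \<le> (\<Sum>l\<in>(UNIV::'b set). \<Sum>k\<in>(UNIV::'d set). C * (1 + Dx) * A t)"
      proof (intro sum_mono)
        fix l k
        have "(x t i - (1 / real CARD('n)) *\<^sub>R (\<chi> l. \<Sum>j\<in>UNIV. phi t j l *\<^sub>R (x t j $ l))) $ l $ k
              = x t i $ l $ k - (1 / real CARD('n)) * (\<Sum>j\<in>UNIV. phi t j l * x t j $ l $ k)"
          by simp
        moreover have "\<bar>x t i $ l $ k - (1 / real CARD('n)) * (\<Sum>j\<in>UNIV. phi t j l * x t j $ l $ k)\<bar> \<le> sp (\<lambda>j. x t j $ l $ k)"
          by (rule avg_dev[of "\<lambda>j. phi t j l" "\<lambda>j. x t j $ l $ k" i]) (use phi_pos phi_sum in \<open>auto intro: less_imp_le simp: N_def\<close>)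
        ultimately show "\<bar>(x t i - (1 / real CARD('n)) *\<^sub>R (\<chi> l. \<Sum>j\<in>UNIV. phi t j l *\<^sub>R (x t j $ l))) $ l $ k\<bar> \<le> C * (1 + Dx) * A t"
          using spb[of t l k] by simp
      qed
      also have "\<dots> = K * A t" by (simp add: K_def)
      finally show ?thesis by (simp add: A_def)
    qed
    have res: "(err \<longlonglongrightarrow> 0) \<and> summable (\<lambda>t. gamma t * err t) \<and> summable (\<lambda>t. (err t)\<^sup>2)"
      by (rule analytic[OF lam0 lam1 gamma_pos gamma_le1 gamma_mono gamma_sq K0 _ eb]) (simp add: err_def)
    thus "let sbar = (\<lambda>t. (1 / real CARD('n)) *\<^sub>R (\<chi> l. \<Sum>j\<in>UNIV. phi t j l *\<^sub>R (x t j $ l)))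
             in ((\<lambda>t. norm (x t i - sbar t)) \<longlonglongrightarrow> 0)
              \<and> summable (\<lambda>t. gamma t * norm (x t i - sbar t))
              \<and> summable (\<lambda>t. (norm (x t i - sbar t))\<^sup>2)"
      by (simp add: Let_def err_def[abs_def])
  qed
qed

end
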